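(* Let $P>0$ be the least common multiple of the indices in $N$ of the sublattices generated by the vertex sets of all $(d-1)$-simplices with vertices in $\mathcal A$ (i.e. all linearly independent $d$-element subsets of $\mathcal A$). A lattice element $w\in N\cap K$ satisfies $x^w\in M(\beta)$ if and only if there exists an integer $k>0$ such that $(\beta-w)+kPw$ lies in the semigroup generated by the elements of $\mathcal A$.
   Context: $N\cong\mathbb Z^d$ lattice, $M=\mathrm{Hom}(N,\mathbb Z)$, $\mathcal A=\{v_1,\dots,v_n\}\subset N$ generating $N$ with a homomorphism $\mathrm h:N\to\mathbb Z$, $\mathrm h(v_j)=1$; $K=\mathbb R_{\ge0}\mathrm{Conv}(\mathcal A)$; $\Sigma$ the simplicial fan supported on $K$ from a regular triangulation of $\mathrm{Conv}(\mathcal A)$ with vertices in $\mathcal A$; fix $\beta\in N$. $\mathbb C[K,\Sigma]$: basis $x^w$ ($w\in K\cap N$), $x^{w_1}x^{w_2}=x^{w_1+w_2}$ if a cone of $\Sigma$ contains both, else $0$. $\mathrm{Box}(\Sigma)$: $v\in N$ with $v=\sum q_jv_j$, $0\le q_j<1$, $q_j=0$ unless $v_j$ spans a ray of one fixed maximal cone; $\sigma(v)$ the smallest cone containing $v$. $R$: subring generated by $x^{v_j}$ with $\mathbb R_{\ge0}v_j\in\Sigma$. $M(\beta)$: the $R$-submodule generated by $x^v\prod_{j:r_j<0,\ \mathbb R_{\ge0}v_j\in\Sigma,\ \mathbb R_{\ge0}v_j\not\prec\sigma(v)}x^{v_j}$ for all $v\in\mathrm{Box}(\Sigma)$, $r\in\mathbb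 Z^n$ with $v+\sum r_jv_j=\beta$ and $r_j\ge0$ whenever $\mathbb R_{\ge0}v_j\notin\Sigma$. *)

theory Defs
  imports "HOL-Analysis.Analysis"
begin

text \<open>The lattice N is int^'d (d = CARD('d)); A = {v j | j < n}.
  Real points of N are obtained via rv.\<close>

definition rv :: "int^'d \<Rightarrow> real^'d" where
  "rv x = (\<chi> i. real_of_int (x $ i))"

definition gen_cone :: "(real^'d) set \<Rightarrow> (real^'d) set" where
  "gen_cone X = {y. \<exists>c. (\<forall>x\<in>X. 0 \<le> c x) \<and> y = (\<Sum>x\<in>X. c x *\<^sub>R x)}"

definition int_span :: "(int^'d) set \<Rightarrow> (int^'d) set" where
  "int_span X = {y. \<exists>F c. finite F \<and> F \<subseteq> X \<and> y = (\<Sum>x\<in>F. (c x :: int) *s x)}"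

definition nat_span :: "(int^'d) set \<Rightarrow> (int^'d) set" where
  "nat_span X = {y. \<exists>F c. finite F \<and> F \<subseteq> X \<and> y = (\<Sum>x\<in>F. int (c x :: nat) *s x)}"

definition lattice_index :: "(int^'d) set \<Rightarrow> nat" where
  "lattice_index L = card (range (\<lambda>w. (+) w ` L))"

definition simplices :: "(nat \<Rightarrow> int^'d) \<Rightarrow> nat \<Rightarrow> nat set set" where
  "simplices v n = {S. S \<subseteq> {..<n} \<and> card S = CARD('d) \<and> independent (rv ` v ` S)}"

definition P_const :: "(nat \<Rightarrow> int^'d) \<Rightarrow> nat \<Rightarrow> nat" where
  "P_const v n = Lcm ((\<lambda>S. lattice_index (int_span (v ` S))) ` simplices v n)"

text \<open>T (a set of index sets of maximal simplices) is a regular triangulation of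
  Conv(A) with vertices in A: the simplices are full-dimensional, cover Conv(A),
  and are exactly lower facets of the lifting by some height function omega
  (points of A lie on h = 1, so affine functions there are linear functionals).\<close>
definition regular_triangulation :: "(nat \<Rightarrow> int^'d) \<Rightarrow> nat \<Rightarrow> nat set set \<Rightarrow> bool" where
  "regular_triangulation v n T \<longleftrightarrow>
     T \<subseteq> simplices v n \<and>
     (\<Union>S\<in>T. convex hull (rv ` v ` S)) = convex hull (rv ` v ` {..<n}) \<and>
     (\<exists>\<omega> :: nat \<Rightarrow> real. \<forall>S\<in>T. \<exists>\<psi> :: real^'d \<Rightarrow> real. linear \<psi> \<and>
        (\<forall>j\<in>S. \<psi> (rv (v j)) = \<omega> j) \<and> (\<forall>j\<in>{..<n} - S. \<psi> (rv (v j)) < \<omega> j))"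

definition fan :: "(nat \<Rightarrow> int^'d) \<Rightarrow> nat set set \<Rightarrow> (real^'d) set set" where
  "fan v T = {gen_cone (rv ` v ` F) | F. \<exists>S\<in>T. F \<subseteq> S}"

definition Kcone :: "(nat \<Rightarrow> int^'d) \<Rightarrow> nat \<Rightarrow> (real^'d) set" where
  "Kcone v n = {c *\<^sub>R x | c x. 0 \<le> c \<and> x \<in> convex hull (rv ` v ` {..<n})}"

definition ray :: "(nat \<Rightarrow> int^'d) \<Rightarrow> nat \<Rightarrow> (real^'d) set" where
  "ray v j = {c *\<^sub>R rv (v j) | c. 0 \<le> c}"

definition same_cone :: "(nat \<Rightarrow> int^'d) \<Rightarrow> nat set set \<Rightarrow> int^'d \<Rightarrow> int^'d \<Rightarrow> bool" where
  "same_cone v T a b \<longleftrightarrow> (\<exists>C\<in>fan v T. rv a \<in> C \<and> rv b \<in> C)"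

text \<open>Elements of C[K,Sigma] are finitely supported functions N -> C (supported in K);
  x^w is xmon w; multiplication is the deformed product.\<close>
definition xmon :: "int^'d \<Rightarrow> (int^'d \<Rightarrow> complex)" where
  "xmon w = (\<lambda>u. if u = w then 1 else 0)"

definition rmult :: "(nat \<Rightarrow> int^'d) \<Rightarrow> nat set set \<Rightarrow>
    (int^'d \<Rightarrow> complex) \<Rightarrow> (int^'d \<Rightarrow> complex) \<Rightarrow> (int^'d \<Rightarrow> complex)" where
  "rmult v T f g = (\<lambda>u. \<Sum>p\<in>{(a, b). f a \<noteq> 0 \<and> g b \<noteq> 0 \<and> a + b = u \<and> same_cone v T a b}.
                       f (fst p) * g (snd p))"

inductive_set Rsub :: "(nat \<Rightarrow> int^'d) \<Rightarrow> nat \<Rightarrow> nat set set \<Rightarrow> (int^'d \<Rightarrow> complex) set"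
  for v n T where
  one: "xmon 0 \<in> Rsub v n T"
| gen: "j < n \<Longrightarrow> ray v j \<in> fan v T \<Longrightarrow> xmon (v j) \<in> Rsub v n T"
| add: "f \<in> Rsub v n T \<Longrightarrow> g \<in> Rsub v n T \<Longrightarrow> (\<lambda>u. f u + g u) \<in> Rsub v n T"
| scal: "f \<in> Rsub v n T \<Longrightarrow> (\<lambda>u. c * f u) \<in> Rsub v n T"
| mult: "f \<in> Rsub v n T \<Longrightarrow> g \<in> Rsub v n T \<Longrightarrow> rmult v T f g \<in> Rsub v n T"

definition Box :: "(nat \<Rightarrow> int^'d) \<Rightarrow> nat set set \<Rightarrow> (int^'d) set" where
  "Box v T = {b. \<exists>S\<in>T. \<exists>q :: nat \<Rightarrow> real. (\<forall>j. 0 \<le> q j \<and> q j < 1) \<and>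
      rv b = (\<Sum>j\<in>S. q j *\<^sub>R rv (v j))}"

definition sigma :: "(nat \<Rightarrow> int^'d) \<Rightarrow> nat set set \<Rightarrow> int^'d \<Rightarrow> (real^'d) set" where
  "sigma v T b = (THE C. C \<in> fan v T \<and> rv b \<in> C \<and> (\<forall>C'\<in>fan v T. rv b \<in> C' \<longrightarrow> C \<subseteq> C'))"

definition Mgens :: "(nat \<Rightarrow> int^'d) \<Rightarrow> nat \<Rightarrow> nat set set \<Rightarrow> int^'d \<Rightarrow> (int^'d \<Rightarrow> complex) set" where
  "Mgens v n T \<beta> = {foldr (rmult v T)
        (map (\<lambda>j. xmon (v j)) (sorted_list_of_set
           {j. j < n \<and> r j < 0 \<and> ray v j \<in> fan v T \<and> \<not> (ray v j face_of sigma v T b)}))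
        (xmon b)
      | b r. b \<in> Box v T \<and> b + (\<Sum>j<n. r j *s v j) = \<beta> \<and>
             (\<forall>j<n. ray v j \<notin> fan v T \<longrightarrow> 0 \<le> r j)}"

inductive_set Mmod :: "(nat \<Rightarrow> int^'d) \<Rightarrow> nat \<Rightarrow> nat set set \<Rightarrow> int^'d \<Rightarrow> (int^'d \<Rightarrow> complex) set"
  for v n T \<beta> where
  zero: "(\<lambda>_. 0) \<in> Mmod v n T \<beta>"
| gen: "g \<in> Mgens v n T \<beta> \<Longrightarrow> g \<in> Mmod v n T \<beta>"
| add: "f \<in> Mmod v n T \<beta> \<Longrightarrow> g \<in> Mmod v n T \<beta> \<Longrightarrow> (\<lambda>u. f u + g u) \<in> Mmod v n T \<beta>"
| smult: "f \<in> Rsub v n T \<Longrightarrow> m \<in> Mmod v n T \<beta> \<Longrightarrow> rmult v T f m \<in> Mmod v n T \<beta>"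

end

theory Submission
  imports Defs
begin

lemma rv_add[simp]: "rv (x + y) = rv x + rv y" by (simp add: rv_def vec_eq_iff)
lemma rv_diff[simp]: "rv (x - y) = rv x - rv y" by (simp add: rv_def vec_eq_iff)
lemma rv_zero[simp]: "rv 0 = 0" by (simp add: rv_def vec_eq_iff)
lemma rv_smult[simp]: "rv (c *s x) = of_int c *\<^sub>R rv x" by (simp add: rv_def vec_eq_iff)
lemma rv_sum[simp]: "rv (sum f A) = (\<Sum>a\<in>A. rv (f a))"
  by (induction A rule: infinite_finite_induct) auto
lemma rv_inj[simp]: "rv x = rv y \<longleftrightarrow> x = y" by (simp add: rv_def vec_eq_iff)

lemma int_span_idx:
  assumes "inj_on v I" "finite I"
  shows "y \<in> int_span (v ` I) \<longleftrightarrow> (\<exists>e. y = (\<Sum>j\<in>I. e j *s v j))"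
proof
  assume "y \<in> int_span (v ` I)"
  then obtain F c where F: "finite F" "F \<subseteq> v ` I" "y = (\<Sum>x\<in>F. (c x :: int) *s x)"
    unfolding int_span_def by blast
  define e where "e j = (if v j \<in> F then c (v j) else 0)" for j
  have "(\<Sum>j\<in>I. e j *s v j) = (\<Sum>x\<in>v ` I. (if x \<in> F then c x else 0) *s x)"
    using assms(1) by (simp add: sum.reindex e_def)
  also have "\<dots> = (\<Sum>x\<in>v ` I. (if x \<in> F then c x *s x else 0))"
    by (rule sum.cong) auto
  also have "\<dots> = (\<Sum>x\<in>F. c x *s x)"
    using F assms by (simp add: sum.If_cases Int_absorb1)
  finally show "\<exists>e. y = (\<Sum>j\<in>I. e j *s v j)" using F by metis
next
  assume "\<exists>e. y = (\<Sum>j\<in>I. e j *s v j)"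
  then obtain e where e: "y = (\<Sum>j\<in>I. e j *s v j)" by blast
  define c where "c x = e (the_inv_into I v x)" for x
  have "y = (\<Sum>x\<in>v ` I. c x *s x)"
    using assms(1) e by (simp add: sum.reindex c_def the_inv_into_f_f)
  then show "y \<in> int_span (v ` I)" unfolding int_span_def using assms by blast
qed

lemma nat_span_idx:
  assumes "inj_on v I" "finite I"
  shows "y \<in> nat_span (v ` I) \<longleftrightarrow> (\<exists>e. y = (\<Sum>j\<in>I. int (e j) *s v j))"
proof
  assume "y \<in> nat_span (v ` I)"
  then obtain F c where F: "finite F" "F \<subseteq> v ` I" "y = (\<Sum>x\<in>F. int (c x :: nat) *s x)"
    unfolding nat_span_def by blast
  define e where "e j = (if v j \<in> F then c (v j) else 0)" for j
  have "(\<Sum>j\<in>I. int (e j) *s v j) = (\<Sum>x\<in>v ` I. int (if x \<in> F then c x else 0) *s x)"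
    using assms(1) by (simp add: sum.reindex e_def)
  also have "\<dots> = (\<Sum>x\<in>v ` I. (if x \<in> F then int (c x) *s x else 0))"
    by (rule sum.cong) auto
  also have "\<dots> = (\<Sum>x\<in>F. int (c x) *s x)"
    using F assms by (simp add: sum.If_cases Int_absorb1)
  finally show "\<exists>e. y = (\<Sum>j\<in>I. int (e j) *s v j)" using F by metis
next
  assume "\<exists>e. y = (\<Sum>j\<in>I. int (e j) *s v j)"
  then obtain e where e: "y = (\<Sum>j\<in>I. int (e j) *s v j)" by blast
  define c where "c x = e (the_inv_into I v x)" for x
  have "y = (\<Sum>x\<in>v ` I. int (c x) *s x)"
    using assms(1) e by (simp add: sum.reindex c_def the_inv_into_f_f)
  then show "y \<in> nat_span (v ` I)" unfolding nat_span_def using assms by blast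
qed

lemma xmon_neq0: "xmon a u \<noteq> 0 \<longleftrightarrow> u = a" by (simp add: xmon_def)

lemma rmult_xmon_app:
  "rmult v T (xmon a) (xmon b) u = (if same_cone v T a b then xmon (a + b) u else 0)"
proof (cases "a + b = u \<and> same_cone v T a b")
  case True
  then have "{(a', b'). xmon a a' \<noteq> 0 \<and> xmon b b' \<noteq> 0 \<and> a' + b' = u \<and> same_cone v T a' b'} = {(a, b)}"
    unfolding xmon_neq0 by blast
  then show ?thesis using True by (simp add: rmult_def xmon_def)
next
  case False
  then have "{(a', b'). xmon a a' \<noteq> 0 \<and> xmon b b' \<noteq> 0 \<and> a' + b' = u \<and> same_cone v T a' b'} = {}"
    unfolding xmon_neq0 by blast
  then show ?thesis using False by (auto simp add: rmult_def xmon_def)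
qed

lemma rmult_nz: "rmult v T f g u \<noteq> 0 \<Longrightarrow> \<exists>a b. f a \<noteq> 0 \<and> g b \<noteq> 0 \<and> u = a + b"
  unfolding rmult_def by (drule sum.not_neutral_contains_not_neutral) auto

lemma inj_rvv: "inj_on v {..<n} \<Longrightarrow> S \<subseteq> {..<n} \<Longrightarrow> inj_on (\<lambda>i. rv (v i)) S"
  unfolding inj_on_def by (simp add: subset_iff)

lemma img_rvv: "rv ` v ` S = (\<lambda>i. rv (v i)) ` S" by auto

lemma coord_zero:
  assumes "inj_on v {..<n}" "S \<subseteq> {..<n}" "finite S" "independent (rv ` v ` S)"
    "(\<Sum>i\<in>S. a i *\<^sub>R rv (v i)) = 0" "i \<in> S"
  shows "a i = 0"
proof (rule ccontr)
  assume ai: "a i \<noteq> 0"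
  let ?f = "\<lambda>i. rv (v i)"
  have inj: "inj_on ?f S" using inj_rvv assms by blast
  define u where "u x = a (the_inv_into S ?f x)" for x
  have uf: "\<And>i. i \<in> S \<Longrightarrow> u (?f i) = a i" by (simp add: u_def the_inv_into_f_f[OF inj])
  have "(\<Sum>x\<in>?f ` S. u x *\<^sub>R x) = (\<Sum>i\<in>S. u (?f i) *\<^sub>R ?f i)"
    using inj by (simp add: sum.reindex)
  also have "\<dots> = (\<Sum>i\<in>S. a i *\<^sub>R rv (v i))" by (rule sum.cong) (simp_all add: uf)
  finally have "(\<Sum>x\<in>?f ` S. u x *\<^sub>R x) = (\<Sum>i\<in>S. a i *\<^sub>R rv (v i))" .
  moreover have "u (?f i) \<noteq> 0" using ai assms(6) uf by simp
  ultimately have "dependent (?f ` S)"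
    using assms(3,5,6) by (subst real_vector.dependent_finite) auto
  then show False using assms(4) img_rvv by metis
qed

lemma coord_unique:
  assumes "inj_on v {..<n}" "S \<subseteq> {..<n}" "finite S" "independent (rv ` v ` S)"
    "(\<Sum>i\<in>S. a i *\<^sub>R rv (v i)) = (\<Sum>i\<in>S. b i *\<^sub>R rv (v i))" "i \<in> S"
  shows "a i = b i"
proof -
  have "(\<Sum>i\<in>S. (a i - b i) *\<^sub>R rv (v i)) = 0"
    using assms(5) by (simp add: scaleR_diff_left sum_subtractf)
  from coord_zero[OF assms(1-4) this assms(6)] show ?thesis by simp
qed

lemma gen_cone_idx:
  assumes "inj_on v {..<n}" "F \<subseteq> {..<n}" "finite F"
  shows "x \<in> gen_cone (rv ` v ` F) \<longleftrightarrow> (\<exists>c. (\<forall>i\<in>F. 0 \<le> c i) \<and> x = (\<Sum>i\<in>F. c i *\<^sub>R rv (v i)))"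
proof -
  let ?f = "\<lambda>i. rv (v i)"
  have inj: "inj_on ?f F" using inj_rvv assms by blast
  have im: "rv ` v ` F = ?f ` F" by (rule img_rvv)
  show ?thesis
  proof
    assume "x \<in> gen_cone (rv ` v ` F)"
    then obtain c where c: "\<forall>y\<in>?f ` F. 0 \<le> c y" "x = (\<Sum>y\<in>?f ` F. c y *\<^sub>R y)"
      unfolding gen_cone_def im by blast
    have "x = (\<Sum>i\<in>F. c (?f i) *\<^sub>R rv (v i))"
      using c(2) inj by (simp add: sum.reindex)
    moreover have "\<forall>i\<in>F. 0 \<le> c (?f i)" using c(1) by blast
    ultimately show "\<exists>c. (\<forall>i\<in>F. 0 \<le> c i) \<and> x = (\<Sum>i\<in>F. c i *\<^sub>R rv (v i))"
      by (intro exI[of _ "\<lambda>i. c (?f i)"]) (intro conjI)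
  next
    assume "\<exists>c. (\<forall>i\<in>F. 0 \<le> c i) \<and> x = (\<Sum>i\<in>F. c i *\<^sub>R rv (v i))"
    then obtain c where c: "\<forall>i\<in>F. 0 \<le> c i" "x = (\<Sum>i\<in>F. c i *\<^sub>R rv (v i))" by blast
    define u where "u y = c (the_inv_into F ?f y)" for y
    have uf: "\<And>i. i \<in> F \<Longrightarrow> u (?f i) = c i" by (simp add: u_def the_inv_into_f_f[OF inj])
    have "(\<Sum>y\<in>?f ` F. u y *\<^sub>R y) = (\<Sum>i\<in>F. u (?f i) *\<^sub>R ?f i)"
      using inj by (simp add: sum.reindex)
    also have "\<dots> = x" unfolding c(2) by (rule sum.cong) (simp_all add: uf)
    finally have "x = (\<Sum>y\<in>?f ` F. u y *\<^sub>R y)" by simp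
    moreover have "\<forall>y\<in>?f ` F. 0 \<le> u y" using c(1) uf by auto
    ultimately show "x \<in> gen_cone (rv ` v ` F)" unfolding gen_cone_def im by blast
  qed
qed

lemma sum_if_restrict:
  fixes g :: "'i \<Rightarrow> 'a::real_vector"
  assumes "finite G" "F \<subseteq> G"
  shows "(\<Sum>i\<in>G. (if i \<in> F then c i else 0) *\<^sub>R g i) = (\<Sum>i\<in>F. c i *\<^sub>R g i)"
  by (rule sum.mono_neutral_cong_right[OF assms]) auto

lemma gen_cone_mono:
  assumes "inj_on v {..<n}" "G \<subseteq> {..<n}" "finite G" "F \<subseteq> G"
  shows "gen_cone (rv ` v ` F) \<subseteq> gen_cone (rv ` v ` G)"
proof
  fix x assume x: "x \<in> gen_cone (rv ` v ` F)"
  have F1: "F \<subseteq> {..<n}" using assms(4,2) by (rule order_trans)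
  have F2: "finite F" using assms(3,4) by (rule rev_finite_subset)
  note F = F1 F2
  obtain c where c: "\<forall>i\<in>F. 0 \<le> c i" "x = (\<Sum>i\<in>F. c i *\<^sub>R rv (v i))"
    using x unfolding gen_cone_idx[OF assms(1) F] by blast
  have "x = (\<Sum>i\<in>G. (if i \<in> F then c i else 0) *\<^sub>R rv (v i))"
    unfolding c(2) by (rule sum_if_restrict[OF assms(3,4), symmetric])
  moreover have "\<forall>i\<in>G. 0 \<le> (if i \<in> F then c i else 0)" using c(1) by simp
  ultimately have "\<exists>c. (\<forall>i\<in>G. 0 \<le> c i) \<and> x = (\<Sum>i\<in>G. c i *\<^sub>R rv (v i))"
    by (intro exI[of _ "\<lambda>i. if i \<in> F then c i else 0"]) (intro conjI)
  then show "x \<in> gen_cone (rv ` v ` G)"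
    unfolding gen_cone_idx[OF assms(1-3)] .
qed

lemma simplex_span:
  assumes "inj_on v {..<n}" "S \<in> simplices v n"
  shows "\<exists>c. x = (\<Sum>i\<in>S. c i *\<^sub>R rv (v i))"
proof -
  have S: "S \<subseteq> {..<n}" "card S = CARD('a)" "independent (rv ` v ` S)"
    using assms(2) unfolding simplices_def by auto
  have fin: "finite S" using S(1) finite_subset by blast
  let ?f = "\<lambda>i. rv (v i)"
  have inj: "inj_on ?f S" using inj_rvv assms(1) S(1) by blast
  have cB: "card (?f ` S) = CARD('a)" using inj S(2) card_image by metis
  have ind: "independent (?f ` S)" using S(3) img_rvv by metis
  have "UNIV \<subseteq> span (?f ` S)"
    by (rule eucl.card_ge_dim_independent[of "?f ` S" UNIV]) (use ind cB in auto)
  then have "x \<in> span (?f ` S)" by blast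
  then obtain u where u: "x = (\<Sum>y\<in>?f ` S. u y *\<^sub>R y)"
    using real_vector.span_finite[of "?f ` S"] fin by auto
  then have "x = (\<Sum>i\<in>S. u (?f i) *\<^sub>R rv (v i))" using inj by (simp add: sum.reindex)
  then show ?thesis by (rule exI[of _ "\<lambda>i. u (?f i)"])
qed

lemma sum_const_smult:
  fixes x :: "int^'d"
  shows "finite A \<Longrightarrow> (\<Sum>a\<in>A. x) = int (card A) *s x"
  by (simp add: vec_eq_iff of_nat_index)

locale subgrp =
  fixes L :: "(int^'d) set"
  assumes zero: "0 \<in> L" and addc: "\<And>a b. a \<in> L \<Longrightarrow> b \<in> L \<Longrightarrow> a + b \<in> L"
    and negc: "\<And>a. a \<in> L \<Longrightarrow> - a \<in> L"
begin

lemma diffc: "a \<in> L \<Longrightarrow> b \<in> L \<Longrightarrow> a - b \<in> L"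
  using addc[of a "- b"] negc[of b] by simp

lemma sumc: "finite A \<Longrightarrow> (\<And>a. a \<in> A \<Longrightarrow> f a \<in> L) \<Longrightarrow> sum f A \<in> L"
proof (induction A rule: finite_induct)
  case empty then show ?case using zero by simp
next
  case (insert a A) then show ?case using addc by simp
qed

lemma coset_eq: "w - w' \<in> L \<Longrightarrow> (+) w ` L = (+) w' ` L"
proof -
  assume d: "w - w' \<in> L"
  have 1: "(+) u ` L \<subseteq> (+) u' ` L" if "u - u' \<in> L" for u u'
  proof
    fix y assume "y \<in> (+) u ` L"
    then obtain a where a: "a \<in> L" "y = u + a" by blast
    have "y = u' + ((u - u') + a)" using a(2) by simp
    moreover have "(u - u') + a \<in> L" using addc that a(1) by blast
    ultimately show "y \<in> (+) u' ` L" by blast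
  qed
  have d2: "w' - w \<in> L" using negc[OF d] by simp
  show ?thesis using 1[OF d] 1[OF d2] by (rule equalityI)
qed

lemma coset_eqD: "(+) w ` L = (+) w' ` L \<Longrightarrow> w - w' \<in> L"
proof -
  assume e: "(+) w ` L = (+) w' ` L"
  have "w \<in> (+) w ` L" using zero by (metis add.right_neutral image_eqI)
  then have "w \<in> (+) w' ` L" using e by simp
  then obtain a where "a \<in> L" "w = w' + a" by blast
  then show ?thesis by simp
qed

lemma index_mult:
  assumes fin: "finite (range (\<lambda>w. (+) w ` L))"
  shows "int (card (range (\<lambda>w. (+) w ` L))) *s x \<in> L"
proof -
  let ?G = "range (\<lambda>w. (+) w ` L)"
  define rep where "rep C = (SOME w. C = (+) w ` L)" for C
  have rep: "C = (+) (rep C) ` L" if C: "C \<in> ?G" for C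
  proof -
    obtain w where "C = (+) w ` L" using C by blast
    then show ?thesis unfolding rep_def by (rule someI)
  qed
  define tau where "tau C = (+) x ` C" for C
  define tau' where "tau' C = (+) (- x) ` C" for C
  have tau_w: "tau ((+) w ` L) = (+) (x + w) ` L" for w
    unfolding tau_def image_image by (intro image_cong refl) (simp add: algebra_simps)
  have tau'_w: "tau' ((+) w ` L) = (+) (- x + w) ` L" for w
    unfolding tau'_def image_image by (intro image_cong refl) (simp add: algebra_simps)
  have tauG: "tau C \<in> ?G" if "C \<in> ?G" for C
    using that tau_w by auto
  have tau'G: "tau' C \<in> ?G" if "C \<in> ?G" for C
    using that tau'_w by auto
  have tt': "tau (tau' C) = C" if "C \<in> ?G" for C
    using that tau_w tau'_w by auto
  have t't: "tau' (tau C) = C" if "C \<in> ?G" for C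
    using that tau_w tau'_w by auto
  have eqs: "(\<Sum>C\<in>?G. rep (tau C)) = (\<Sum>C\<in>?G. rep C)"
    by (rule sum.reindex_bij_witness[where i = tau' and j = tau]) (simp_all add: tauG tau'G tt' t't)
  have mem: "rep (tau C) - (x + rep C) \<in> L" if "C \<in> ?G" for C
  proof -
    have "tau C = (+) (x + rep C) ` L" using rep[OF that] tau_w by metis
    moreover have "tau C = (+) (rep (tau C)) ` L" using rep[OF tauG[OF that]] .
    ultimately show ?thesis using coset_eqD by metis
  qed
  have inL: "(\<Sum>C\<in>?G. rep (tau C) - (x + rep C)) \<in> L"
    by (rule sumc[OF fin]) (rule mem)
  have "(\<Sum>C\<in>?G. rep (tau C) - (x + rep C)) = (\<Sum>C\<in>?G. rep (tau C)) - ((\<Sum>C\<in>?G. x) + (\<Sum>C\<in>?G. rep C))"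
    by (simp only: sum_subtractf sum.distrib)
  also have "\<dots> = - (\<Sum>C\<in>?G. x)" unfolding eqs by (simp add: algebra_simps)
  also have "\<dots> = - (int (card ?G) *s x)" unfolding sum_const_smult[OF fin] ..
  finally have "- (int (card ?G) *s x) \<in> L" using inL by simp
  from negc[OF this] show ?thesis by simp
qed

end

lemma int_span_subgrp:
  assumes "inj_on v I" "finite I"
  shows "subgrp (int_span (v ` I))"
proof
  show "0 \<in> int_span (v ` I)"
    unfolding int_span_idx[OF assms] by (rule exI[of _ "\<lambda>_. 0"]) simp
next
  fix a b assume "a \<in> int_span (v ` I)" "b \<in> int_span (v ` I)"
  then obtain e1 e2 where "a = (\<Sum>j\<in>I. e1 j *s v j)" "b = (\<Sum>j\<in>I. e2 j *s v j)"
    unfolding int_span_idx[OF assms] by blast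
  then have "a + b = (\<Sum>j\<in>I. (e1 j + e2 j) *s v j)"
    by (simp add: vector_sadd_rdistrib sum.distrib)
  then show "a + b \<in> int_span (v ` I)" unfolding int_span_idx[OF assms] by (rule exI[of _ "\<lambda>j. e1 j + e2 j"])
next
  fix a assume "a \<in> int_span (v ` I)"
  then obtain e1 where "a = (\<Sum>j\<in>I. e1 j *s v j)"
    unfolding int_span_idx[OF assms] by blast
  then have "- a = (\<Sum>j\<in>I. (- e1 j) *s v j)"
    by (simp add: sum_negf vec_eq_iff)
  then show "- a \<in> int_span (v ` I)" unfolding int_span_idx[OF assms] by (rule exI[of _ "\<lambda>j. - e1 j"])
qed


lemma rv_nth[simp]: "rv x $ i = real_of_int (x $ i)" by (simp add: rv_def)

lemma int_span_smult:
  assumes "inj_on v I" "finite I" "y \<in> int_span (v ` I)"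
  shows "k *s y \<in> int_span (v ` I)"
proof -
  obtain e where e: "y = (\<Sum>j\<in>I. e j *s v j)" using assms int_span_idx by blast
  have "k *s y = (\<Sum>j\<in>I. (k * e j) *s v j)"
    unfolding e by (simp add: vec_eq_iff sum_distrib_left mult.assoc)
  then show ?thesis unfolding int_span_idx[OF assms(1,2)] by (rule exI[of _ "\<lambda>j. k * e j"])
qed

lemma finite_box_int:
  "finite {z::int^'d. \<forall>i. z $ i \<in> {-R..R}}"
proof -
  have "{z::int^'d. \<forall>i. z $ i \<in> {-R..R}} \<subseteq> vec_lambda ` (PiE UNIV (\<lambda>_. {-R..R}))"
  proof
    fix z :: "int^'d" assume "z \<in> {z. \<forall>i. z $ i \<in> {-R..R}}"
    then have "vec_nth z \<in> PiE UNIV (\<lambda>_. {-R..R})" by auto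
    moreover have "z = vec_lambda (vec_nth z)" by simp
    ultimately show "z \<in> vec_lambda ` (PiE UNIV (\<lambda>_. {-R..R}))" by blast
  qed
  moreover have "finite (PiE (UNIV::'d set) (\<lambda>_. {-R..R}))" by (rule finite_PiE) auto
  ultimately show ?thesis using finite_subset by blast
qed

lemma index_finite:
  fixes v :: "nat \<Rightarrow> int^'d"
  assumes inj: "inj_on v {..<n}" and S: "S \<in> simplices v n"
  shows "finite (range (\<lambda>w. (+) w ` int_span (v ` S)))"
proof -
  have Ssub: "S \<subseteq> {..<n}" using S unfolding simplices_def by auto
  have finS: "finite S" using Ssub finite_subset by blast
  have injS: "inj_on v S" using inj Ssub inj_on_subset by blast
  let ?L = "int_span (v ` S)"
  interpret subgrp ?L by (rule int_span_subgrp[OF injS finS])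
  define R where "R = (\<Sum>j\<in>S. \<Sum>i\<in>UNIV. \<bar>v j $ i\<bar>)"
  define Pts where "Pts = {z::int^'d. \<forall>i. z $ i \<in> {-R..R}}"
  have finPts: "finite Pts" unfolding Pts_def by (rule finite_box_int)
  have ex: "\<exists>p\<in>Pts. w - p \<in> ?L" for w
  proof -
    obtain c where c: "rv w = (\<Sum>i\<in>S. c i *\<^sub>R rv (v i))" using simplex_span[OF inj S] by blast
    define p where "p = w - (\<Sum>j\<in>S. \<lfloor>c j\<rfloor> *s v j)"
    have "w - p = (\<Sum>j\<in>S. \<lfloor>c j\<rfloor> *s v j)" unfolding p_def by simp
    then have wp: "w - p \<in> ?L" unfolding int_span_idx[OF injS finS] by (rule exI[of _ "\<lambda>j. \<lfloor>c j\<rfloor>"])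
    have rvp: "rv p = (\<Sum>j\<in>S. (c j - of_int \<lfloor>c j\<rfloor>) *\<^sub>R rv (v j))"
      unfolding p_def rv_diff c rv_sum rv_smult by (simp add: scaleR_diff_left sum_subtractf)
    have "p $ i \<in> {-R..R}" for i
    proof -
      have "real_of_int (p $ i) = (\<Sum>j\<in>S. (c j - of_int \<lfloor>c j\<rfloor>) * real_of_int (v j $ i))"
        using arg_cong[OF rvp, of "\<lambda>x. x $ i"] by (simp add: sum_component)
      then have "\<bar>real_of_int (p $ i)\<bar> \<le> (\<Sum>j\<in>S. \<bar>(c j - of_int \<lfloor>c j\<rfloor>) * real_of_int (v j $ i)\<bar>)"
        by (simp add: sum_abs)
      also have "\<dots> \<le> (\<Sum>j\<in>S. real_of_int (\<Sum>i\<in>UNIV. \<bar>v j $ i\<bar>))"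
      proof (rule sum_mono)
        fix j assume "j \<in> S"
        have f: "0 \<le> c j - of_int \<lfloor>c j\<rfloor>" "c j - of_int \<lfloor>c j\<rfloor> \<le> 1" by linarith+
        have "\<bar>(c j - of_int \<lfloor>c j\<rfloor>) * real_of_int (v j $ i)\<bar> \<le> \<bar>real_of_int (v j $ i)\<bar>"
          using f by (simp add: abs_mult mult_left_le_one_le)
        also have "\<dots> = real_of_int \<bar>v j $ i\<bar>" by simp
        also have "\<dots> \<le> real_of_int (\<Sum>i\<in>UNIV. \<bar>v j $ i\<bar>)"
          by (simp only: of_int_le_iff) (rule member_le_sum, auto)
        finally show "\<bar>(c j - of_int \<lfloor>c j\<rfloor>) * real_of_int (v j $ i)\<bar> \<le> real_of_int (\<Sum>i\<in>UNIV. \<bar>v j $ i\<bar>)" .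
      qed
      also have "\<dots> = real_of_int R" unfolding R_def by simp
      finally have "\<bar>real_of_int (p $ i)\<bar> \<le> real_of_int R" .
      then have "\<bar>p $ i\<bar> \<le> R" by linarith
      then show ?thesis by auto
    qed
    then have "p \<in> Pts" unfolding Pts_def by blast
    then show ?thesis using wp by blast
  qed
  have "range (\<lambda>w. (+) w ` ?L) \<subseteq> (\<lambda>p. (+) p ` ?L) ` Pts"
  proof
    fix C assume "C \<in> range (\<lambda>w. (+) w ` ?L)"
    then obtain w where w: "C = (+) w ` ?L" by blast
    obtain p where p: "p \<in> Pts" "w - p \<in> ?L" using ex by blast
    have "C = (+) p ` ?L" using w coset_eq[OF p(2)] by simp
    then show "C \<in> (\<lambda>p. (+) p ` ?L) ` Pts" using p(1) by blast
  qed
  then show ?thesis using finPts finite_subset by blast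
qed

lemma index_pos:
  fixes v :: "nat \<Rightarrow> int^'d"
  assumes inj: "inj_on v {..<n}" and S: "S \<in> simplices v n"
  shows "lattice_index (int_span (v ` S)) > 0"
proof -
  have "range (\<lambda>w. (+) w ` int_span (v ` S)) \<noteq> {}" by blast
  then show ?thesis unfolding lattice_index_def using index_finite[OF assms] by (simp add: card_gt_0_iff)
qed

lemma index_mult_span:
  fixes v :: "nat \<Rightarrow> int^'d"
  assumes inj: "inj_on v {..<n}" and S: "S \<in> simplices v n"
  shows "int (lattice_index (int_span (v ` S))) *s x \<in> int_span (v ` S)"
proof -
  have Ssub: "S \<subseteq> {..<n}" using S unfolding simplices_def by auto
  have finS: "finite S" using Ssub finite_subset by blast
  have injS: "inj_on v S" using inj Ssub inj_on_subset by blast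
  interpret subgrp "int_span (v ` S)" by (rule int_span_subgrp[OF injS finS])
  show ?thesis unfolding lattice_index_def by (rule index_mult[OF index_finite[OF assms]])
qed

lemma finite_simplices: "finite (simplices (v :: nat \<Rightarrow> int^'d) n)"
proof -
  have "simplices v n \<subseteq> Pow {..<n}" unfolding simplices_def by auto
  then show ?thesis using finite_subset by blast
qed

lemma P_pos:
  fixes v :: "nat \<Rightarrow> int^'d"
  assumes inj: "inj_on v {..<n}"
  shows "P_const v n > 0"
proof -
  have "0 \<notin> (\<lambda>S. lattice_index (int_span (v ` S))) ` simplices v n"
  proof
    assume "0 \<in> (\<lambda>S. lattice_index (int_span (v ` S))) ` simplices v n"
    then obtain S where "S \<in> simplices v n" "0 = lattice_index (int_span (v ` S))" by (rule imageE)
    then show False using index_pos[OF inj, of S] by simp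
  qed
  then have "Lcm ((\<lambda>S. lattice_index (int_span (v ` S))) ` simplices v n) \<noteq> 0"
    by (simp add: Lcm_0_iff_nat[OF finite_imageI[OF finite_simplices]])
  then show ?thesis unfolding P_const_def by simp
qed

lemma P_mult_span:
  fixes v :: "nat \<Rightarrow> int^'d"
  assumes inj: "inj_on v {..<n}" and S: "S \<in> simplices v n"
  shows "int (P_const v n) *s x \<in> int_span (v ` S)"
proof -
  have Ssub: "S \<subseteq> {..<n}" using S unfolding simplices_def by auto
  have finS: "finite S" using Ssub finite_subset by blast
  have injS: "inj_on v S" using inj Ssub inj_on_subset by blast
  have "lattice_index (int_span (v ` S)) dvd P_const v n"
    unfolding P_const_def using S by (simp add: dvd_Lcm)
  then obtain q where q: "P_const v n = lattice_index (int_span (v ` S)) * q" by (rule dvdE)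
  have "int (P_const v n) *s x = int q *s (int (lattice_index (int_span (v ` S))) *s x)"
    unfolding q by (simp add: vec_eq_iff)
  then show ?thesis using int_span_smult[OF injS finS index_mult_span[OF assms]] by simp
qed

lemma rt_simplices:
  "regular_triangulation v n T \<Longrightarrow> S \<in> T \<Longrightarrow> S \<in> simplices v n"
  unfolding regular_triangulation_def by blast

lemma simplices_props:
  "S \<in> simplices v n \<Longrightarrow> S \<subseteq> {..<n} \<and> finite S \<and> independent (rv ` v ` S)"
  unfolding simplices_def using finite_subset by auto

lemma inter_supp:
  fixes v :: "nat \<Rightarrow> int^'d" and lam mu :: "nat \<Rightarrow> real"
  assumes rt: "regular_triangulation v n T" and S: "S \<in> T" and S': "S' \<in> T"
    and lam: "\<forall>i\<in>S. 0 \<le> lam i" and mu: "\<forall>i\<in>S'. 0 \<le> mu i"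
    and eq: "(\<Sum>i\<in>S. lam i *\<^sub>R rv (v i)) = (\<Sum>i\<in>S'. mu i *\<^sub>R rv (v i))"
    and i: "i \<in> S" "0 < lam i"
  shows "i \<in> S'"
proof (rule ccontr)
  assume nS': "i \<notin> S'"
  have SS: "S \<subseteq> {..<n}" "finite S" using simplices_props[OF rt_simplices[OF rt S]] by auto
  have SS': "S' \<subseteq> {..<n}" "finite S'" using simplices_props[OF rt_simplices[OF rt S']] by auto
  obtain \<omega> :: "nat \<Rightarrow> real" where om: "\<forall>S\<in>T. \<exists>\<psi> :: real^'d \<Rightarrow> real. linear \<psi> \<and>
        (\<forall>j\<in>S. \<psi> (rv (v j)) = \<omega> j) \<and> (\<forall>j\<in>{..<n} - S. \<psi> (rv (v j)) < \<omega> j)"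
    using conjunct2[OF conjunct2[OF rt[unfolded regular_triangulation_def]]] ..
  from bspec[OF om S'] obtain \<psi> where psi': "linear \<psi> \<and> (\<forall>j\<in>S'. \<psi> (rv (v j)) = \<omega> j) \<and> (\<forall>j\<in>{..<n} - S'. \<psi> (rv (v j)) < \<omega> j)" ..
  note psi = conjunct1[OF psi'] conjunct1[OF conjunct2[OF psi']] conjunct2[OF conjunct2[OF psi']]
  have "\<psi> (\<Sum>i\<in>S. lam i *\<^sub>R rv (v i)) = (\<Sum>i\<in>S. lam i * \<psi> (rv (v i)))"
    using psi(1) by (simp add: real_vector.linear_sum linear_cmul)
  also have "\<dots> < (\<Sum>i\<in>S. lam i * \<omega> i)"
  proof (rule sum_strict_mono_ex1[OF SS(2)])
    show "\<forall>x\<in>S. lam x * \<psi> (rv (v x)) \<le> lam x * \<omega> x"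
    proof
      fix x assume x: "x \<in> S"
      have "\<psi> (rv (v x)) \<le> \<omega> x"
      proof (cases "x \<in> S'")
        case True then show ?thesis using psi(2) by simp
      next
        case False
        then have "x \<in> {..<n} - S'" using x SS(1) by blast
        then show ?thesis using psi(3) less_imp_le by blast
      qed
      then show "lam x * \<psi> (rv (v x)) \<le> lam x * \<omega> x" using lam x by (simp add: mult_left_mono)
    qed
    have "i \<in> {..<n} - S'" using i(1) nS' SS(1) by blast
    then have "\<psi> (rv (v i)) < \<omega> i" using psi(3) by blast
    then have "lam i * \<psi> (rv (v i)) < lam i * \<omega> i" using i(2) by simp
    then show "\<exists>a\<in>S. lam a * \<psi> (rv (v a)) < lam a * \<omega> a" using i(1) by blast
  qed
  finally have A: "\<psi> (\<Sum>i\<in>S. lam i *\<^sub>R rv (v i)) < (\<Sum>i\<in>S. lam i * \<omega> i)" .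
  have B: "\<psi> (\<Sum>i\<in>S'. mu i *\<^sub>R rv (v i)) = (\<Sum>i\<in>S'. mu i * \<omega> i)"
    using psi(1,2) by (simp add: real_vector.linear_sum linear_cmul)
  from bspec[OF om S] obtain \<phi> where phi': "linear \<phi> \<and> (\<forall>j\<in>S. \<phi> (rv (v j)) = \<omega> j) \<and> (\<forall>j\<in>{..<n} - S. \<phi> (rv (v j)) < \<omega> j)" ..
  note phi = conjunct1[OF phi'] conjunct1[OF conjunct2[OF phi']] conjunct2[OF conjunct2[OF phi']]
  have C: "\<phi> (\<Sum>i\<in>S. lam i *\<^sub>R rv (v i)) = (\<Sum>i\<in>S. lam i * \<omega> i)"
    using phi(1,2) by (simp add: real_vector.linear_sum linear_cmul)
  have "\<phi> (\<Sum>i\<in>S'. mu i *\<^sub>R rv (v i)) = (\<Sum>i\<in>S'. mu i * \<phi> (rv (v i)))"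
    using phi(1) by (simp add: real_vector.linear_sum linear_cmul)
  also have "\<dots> \<le> (\<Sum>i\<in>S'. mu i * \<omega> i)"
  proof (rule sum_mono)
    fix x assume x: "x \<in> S'"
    have "\<phi> (rv (v x)) \<le> \<omega> x"
    proof (cases "x \<in> S")
      case True then show ?thesis using phi(2) by simp
    next
      case False
      then have "x \<in> {..<n} - S" using x SS'(1) by blast
      then show ?thesis using phi(3) less_imp_le by blast
    qed
    then show "mu x * \<phi> (rv (v x)) \<le> mu x * \<omega> x" using mu x by (simp add: mult_left_mono)
  qed
  finally have D: "\<phi> (\<Sum>i\<in>S'. mu i *\<^sub>R rv (v i)) \<le> (\<Sum>i\<in>S'. mu i * \<omega> i)" .
  from A B C D eq show False by simp
qed

lemma coords_eq:
  fixes v :: "nat \<Rightarrow> int^'d" and lam mu :: "nat \<Rightarrow> real"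
  assumes inj: "inj_on v {..<n}" and rt: "regular_triangulation v n T" and S: "S \<in> T" and S': "S' \<in> T"
    and lam: "\<forall>i\<in>S. 0 \<le> lam i" and mu: "\<forall>i\<in>S'. 0 \<le> mu i"
    and eq: "(\<Sum>i\<in>S. lam i *\<^sub>R rv (v i)) = (\<Sum>i\<in>S'. mu i *\<^sub>R rv (v i))"
    and i: "i \<in> S"
  shows "lam i = (if i \<in> S' then mu i else 0)"
proof -
  have SP: "S \<subseteq> {..<n}" "finite S" "independent (rv ` v ` S)"
    using simplices_props[OF rt_simplices[OF rt S]] by auto
  have SP': "S' \<subseteq> {..<n}" "finite S'" using simplices_props[OF rt_simplices[OF rt S']] by auto
  have mu0: "mu j = 0" if "j \<in> S'" "j \<notin> S" for j
  proof (rule ccontr)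
    assume "mu j \<noteq> 0"
    then have "0 < mu j" using mu that(1) by force
    then have "j \<in> S" using inter_supp[OF rt S' S mu lam eq[symmetric] that(1)] by blast
    then show False using that(2) by blast
  qed
  have "(\<Sum>i\<in>S'. mu i *\<^sub>R rv (v i)) = (\<Sum>i\<in>S' \<inter> S. mu i *\<^sub>R rv (v i))"
    by (rule sum.mono_neutral_right[OF SP'(2)]) (auto simp: mu0)
  also have "\<dots> = (\<Sum>i\<in>S. (if i \<in> S' then mu i else 0) *\<^sub>R rv (v i))"
    by (rule sum.mono_neutral_cong_left[OF SP(2)]) auto
  finally have "(\<Sum>i\<in>S. lam i *\<^sub>R rv (v i)) = (\<Sum>i\<in>S. (if i \<in> S' then mu i else 0) *\<^sub>R rv (v i))"
    using eq by simp
  from coord_unique[OF inj SP this i] show ?thesis .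
qed

lemma sigma_eq:
  fixes v :: "nat \<Rightarrow> int^'d" and q :: "nat \<Rightarrow> real"
  assumes inj: "inj_on v {..<n}" and rt: "regular_triangulation v n T" and S: "S \<in> T"
    and q: "\<forall>i\<in>S. 0 \<le> q i" and b: "rv b = (\<Sum>i\<in>S. q i *\<^sub>R rv (v i))"
  shows "sigma v T b = gen_cone (rv ` v ` {i\<in>S. 0 < q i})"
proof -
  have SP: "S \<subseteq> {..<n}" "finite S" "independent (rv ` v ` S)"
    using simplices_props[OF rt_simplices[OF rt S]] by auto
  let ?F = "{i\<in>S. 0 < q i}"
  let ?C0 = "gen_cone (rv ` v ` ?F)"
  have F: "?F \<subseteq> {..<n}" "finite ?F" "?F \<subseteq> S" using SP by auto
  have C0fan: "?C0 \<in> fan v T" unfolding fan_def using S F(3) by blast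
  have "rv b = (\<Sum>i\<in>?F. q i *\<^sub>R rv (v i))"
    unfolding b by (rule sum.mono_neutral_right[OF SP(2) F(3)]) (use q in force)
  then have C0b: "rv b \<in> ?C0" unfolding gen_cone_idx[OF inj F(1,2)] using q by (intro exI[of _ q]) auto
  have C0min: "?C0 \<subseteq> C'" if C': "C' \<in> fan v T" "rv b \<in> C'" for C'
  proof -
    obtain F' S' where F': "C' = gen_cone (rv ` v ` F')" "S' \<in> T" "F' \<subseteq> S'"
      using C'(1) unfolding fan_def by blast
    have SP': "S' \<subseteq> {..<n}" "finite S'" using simplices_props[OF rt_simplices[OF rt F'(2)]] by auto
    have F'P: "F' \<subseteq> {..<n}" "finite F'" using F'(3) SP' finite_subset by auto
    obtain c where c: "\<forall>i\<in>F'. 0 \<le> c i" "rv b = (\<Sum>i\<in>F'. c i *\<^sub>R rv (v i))"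
      using C'(2) unfolding F'(1) gen_cone_idx[OF inj F'P] by blast
    let ?mu = "\<lambda>i. if i \<in> F' then c i else 0"
    have eq: "(\<Sum>i\<in>S. q i *\<^sub>R rv (v i)) = (\<Sum>i\<in>S'. ?mu i *\<^sub>R rv (v i))"
      unfolding b[symmetric] c(2) by (rule sum_if_restrict[OF SP'(2) F'(3), symmetric])
    have mu: "\<forall>i\<in>S'. 0 \<le> ?mu i" using c(1) by simp
    have "?F \<subseteq> F'"
    proof
      fix i assume i: "i \<in> ?F"
      have "q i = (if i \<in> S' then ?mu i else 0)" using coords_eq[OF inj rt S F'(2) q mu eq] i by blast
      then show "i \<in> F'" using i by (auto split: if_splits)
    qed
    then show ?thesis unfolding F'(1) by (rule gen_cone_mono[OF inj F'P])
  qed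
  show ?thesis unfolding sigma_def
  proof (rule the_equality)
    show "?C0 \<in> fan v T \<and> rv b \<in> ?C0 \<and> (\<forall>C'\<in>fan v T. rv b \<in> C' \<longrightarrow> ?C0 \<subseteq> C')"
      using C0fan C0b C0min by blast
  next
    fix C assume C: "C \<in> fan v T \<and> rv b \<in> C \<and> (\<forall>C'\<in>fan v T. rv b \<in> C' \<longrightarrow> C \<subseteq> C')"
    then have "C \<subseteq> ?C0" using C0fan C0b by blast
    moreover have "?C0 \<subseteq> C" using C C0min by blast
    ultimately show "C = ?C0" by (rule equalityI)
  qed
qed

lemma sum_single:
  fixes g :: "nat \<Rightarrow> 'a::real_vector"
  assumes "finite F" "j \<in> F"
  shows "(\<Sum>i\<in>F. (if i = j then c else 0) *\<^sub>R g i) = c *\<^sub>R g j"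
proof -
  have "(\<Sum>i\<in>F. (if i = j then c else 0) *\<^sub>R g i) = (\<Sum>i\<in>F. if i = j then c *\<^sub>R g i else 0)"
    by (rule sum.cong) auto
  also have "\<dots> = c *\<^sub>R g j" using sum.delta[OF assms(1), of j "\<lambda>i. c *\<^sub>R g i"] assms(2) by simp
  finally show ?thesis .
qed

lemma coord_unique_sub:
  fixes v :: "nat \<Rightarrow> int^'d"
  assumes inj: "inj_on v {..<n}" and S: "S \<in> simplices v n" and F: "F \<subseteq> S"
    and eq: "(\<Sum>i\<in>F. a i *\<^sub>R rv (v i)) = (\<Sum>i\<in>F. b i *\<^sub>R rv (v i))" and i: "i \<in> F"
  shows "a i = b i"
proof -
  have SP: "S \<subseteq> {..<n}" "finite S" "independent (rv ` v ` S)" using simplices_props[OF S] by auto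
  have eqS: "(\<Sum>i\<in>S. (if i \<in> F then a i else 0) *\<^sub>R rv (v i)) = (\<Sum>i\<in>S. (if i \<in> F then b i else 0) *\<^sub>R rv (v i))"
    unfolding sum_if_restrict[OF SP(2) F] by (rule eq)
  have "i \<in> S" using i F by blast
  from coord_unique[OF inj SP eqS this] i show ?thesis by simp
qed

lemma mem_ray: "x \<in> ray v j \<longleftrightarrow> (\<exists>c. 0 \<le> c \<and> x = c *\<^sub>R rv (v j))"
  unfolding ray_def by blast

lemma face_ray:
  fixes v :: "nat \<Rightarrow> int^'d"
  assumes inj: "inj_on v {..<n}" and S: "S \<in> simplices v n" and F: "F \<subseteq> S" and j: "j \<in> F"
  shows "ray v j face_of gen_cone (rv ` v ` F)"
proof -
  have SP: "S \<subseteq> {..<n}" "finite S" "independent (rv ` v ` S)" using simplices_props[OF S] by auto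
  have FP: "F \<subseteq> {..<n}" "finite F" using F SP finite_subset by auto
  note gc = gen_cone_idx[OF inj FP]
  have sub: "ray v j \<subseteq> gen_cone (rv ` v ` F)"
  proof
    fix x assume "x \<in> ray v j"
    then obtain c where c: "0 \<le> c" "x = c *\<^sub>R rv (v j)" unfolding mem_ray by blast
    have "x = (\<Sum>i\<in>F. (if i = j then c else 0) *\<^sub>R rv (v i))"
      unfolding c(2) sum_single[OF FP(2) j] ..
    moreover have "\<forall>i\<in>F. 0 \<le> (if i = j then c else 0)" using c(1) by simp
    ultimately show "x \<in> gen_cone (rv ` v ` F)" unfolding gc by (intro exI[of _ "\<lambda>i. if i = j then c else 0"]) (intro conjI)
  qed
  have cvx: "convex (ray v j)"
    unfolding convex_def
  proof (intro ballI allI impI)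
    fix x y :: "real^'d" and u w :: real
    assume x: "x \<in> ray v j" and y: "y \<in> ray v j" and u: "0 \<le> u" and w: "0 \<le> w" and "u + w = 1"
    obtain a where a: "0 \<le> a" "x = a *\<^sub>R rv (v j)" using x unfolding mem_ray by blast
    obtain b where b: "0 \<le> b" "y = b *\<^sub>R rv (v j)" using y unfolding mem_ray by blast
    have "u *\<^sub>R x + w *\<^sub>R y = (u * a + w * b) *\<^sub>R rv (v j)" unfolding a(2) b(2) by (simp add: scaleR_add_left)
    moreover have "0 \<le> u * a + w * b" using a(1) b(1) u w by simp
    ultimately show "u *\<^sub>R x + w *\<^sub>R y \<in> ray v j" unfolding mem_ray by blast
  qed
  have ext: "a \<in> ray v j \<and> b \<in> ray v j"
    if ab: "a \<in> gen_cone (rv ` v ` F)" "b \<in> gen_cone (rv ` v ` F)" and x: "x \<in> ray v j" "x \<in> open_segment a b" for a b x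
  proof -
    obtain al where al: "\<forall>i\<in>F. 0 \<le> al i" "a = (\<Sum>i\<in>F. al i *\<^sub>R rv (v i))" using ab(1) unfolding gc by blast
    obtain be where be: "\<forall>i\<in>F. 0 \<le> be i" "b = (\<Sum>i\<in>F. be i *\<^sub>R rv (v i))" using ab(2) unfolding gc by blast
    obtain c where c: "0 \<le> c" "x = c *\<^sub>R rv (v j)" using x(1) unfolding mem_ray by blast
    obtain u where u: "0 < u" "u < 1" "x = (1 - u) *\<^sub>R a + u *\<^sub>R b" using x(2) unfolding in_segment by blast
    have "(\<Sum>i\<in>F. ((1 - u) * al i + u * be i) *\<^sub>R rv (v i)) = (1 - u) *\<^sub>R a + u *\<^sub>R b"
      unfolding al(2) be(2) by (simp add: scaleR_add_left sum.distrib scaleR_sum_right)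
    also have "\<dots> = (\<Sum>i\<in>F. (if i = j then c else 0) *\<^sub>R rv (v i))"
      unfolding sum_single[OF FP(2) j] using u(3) c(2) by simp
    finally have eq: "(\<Sum>i\<in>F. ((1 - u) * al i + u * be i) *\<^sub>R rv (v i)) = (\<Sum>i\<in>F. (if i = j then c else 0) *\<^sub>R rv (v i))" .
    have z: "al i = 0 \<and> be i = 0" if i: "i \<in> F" "i \<noteq> j" for i
    proof -
      have "(1 - u) * al i + u * be i = 0" using coord_unique_sub[OF inj S F eq i(1)] i(2) by simp
      moreover have "0 \<le> (1 - u) * al i" "0 \<le> u * be i" using al(1) be(1) i(1) u by auto
      ultimately have "(1 - u) * al i = 0" "u * be i = 0" by linarith+
      then show ?thesis using u by simp
    qed
    have "a = (\<Sum>i\<in>F. (if i = j then al j else 0) *\<^sub>R rv (v i))"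
      unfolding al(2) by (rule sum.cong) (use z in auto)
    then have "a = al j *\<^sub>R rv (v j)" unfolding sum_single[OF FP(2) j] .
    then have "a \<in> ray v j" unfolding mem_ray using al(1) j by blast
    have "b = (\<Sum>i\<in>F. (if i = j then be j else 0) *\<^sub>R rv (v i))"
      unfolding be(2) by (rule sum.cong) (use z in auto)
    then have "b = be j *\<^sub>R rv (v j)" unfolding sum_single[OF FP(2) j] .
    then have "b \<in> ray v j" unfolding mem_ray using be(1) j by blast
    with \<open>a \<in> ray v j\<close> show ?thesis by blast
  qed
  show ?thesis unfolding face_of_def using sub cvx ext by blast
qed

lemma h_zero:
  fixes h :: "int^'d \<Rightarrow> int"
  assumes "\<forall>x y. h (x + y) = h x + h y" shows "h 0 = 0"
  using assms[rule_format, of 0 0] by simp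

lemma h_smult:
  fixes h :: "int^'d \<Rightarrow> int"
  assumes hadd: "\<forall>x y. h (x + y) = h x + h y" shows "h (k *s x) = k * h x"
proof -
  have nat: "h (int m *s x) = int m * h x" for m
  proof (induction m)
    case 0 then show ?case using h_zero[OF hadd] by (simp add: vec_eq_iff)
  next
    case (Suc m)
    have "int (Suc m) *s x = int m *s x + x" by (simp add: vec_eq_iff algebra_simps)
    then show ?case using Suc hadd by (simp add: algebra_simps)
  qed
  have neg: "h (- y) = - h y" for y
    using hadd[rule_format, of y "- y"] h_zero[OF hadd] by simp
  show ?thesis
  proof (cases "0 \<le> k")
    case True
    then obtain m where "k = int m" using nonneg_int_cases by blast
    then show ?thesis using nat by simp
  next
    case False
    then have "0 \<le> - k" by simp
    then obtain m where "- k = int m" using nonneg_int_cases by blast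
    then have m: "k = - int m" by simp
    have "k *s x = - (int m *s x)" unfolding m by (simp add: vec_eq_iff)
    then show ?thesis using nat neg m by simp
  qed
qed

lemma ray_fan_vertex:
  fixes v :: "nat \<Rightarrow> int^'d" and h :: "int^'d \<Rightarrow> int"
  assumes inj: "inj_on v {..<n}" and hadd: "\<forall>x y. h (x + y) = h x + h y"
    and h1: "\<forall>j<n. h (v j) = 1" and rt: "regular_triangulation v n T"
    and j: "j < n" and rf: "ray v j \<in> fan v T"
  shows "\<exists>S'\<in>T. j \<in> S'"
proof -
  obtain F S' where F: "ray v j = gen_cone (rv ` v ` F)" "S' \<in> T" "F \<subseteq> S'"
    using rf unfolding fan_def by blast
  have SP': "S' \<subseteq> {..<n}" "finite S'" using simplices_props[OF rt_simplices[OF rt F(2)]] by auto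
  have FP: "F \<subseteq> {..<n}" "finite F" using F(3) SP' finite_subset by auto
  note gc = gen_cone_idx[OF inj FP]
  have vj0: "v j \<noteq> 0"
  proof
    assume "v j = 0"
    then have "h (v j) = 0" using h_zero[OF hadd] by simp
    then show False using h1 j by simp
  qed
  have Vj: "rv (v j) \<in> ray v j" unfolding mem_ray by (rule exI[of _ 1]) simp
  have "F \<noteq> {}"
  proof
    assume "F = {}"
    then have "rv (v j) = 0" using Vj unfolding F(1) gc by simp
    then show False using vj0 by (metis rv_inj rv_zero)
  qed
  then obtain i where i: "i \<in> F" by blast
  have "rv (v i) = (\<Sum>l\<in>F. (if l = i then 1 else 0) *\<^sub>R rv (v l))"
    unfolding sum_single[OF FP(2) i] by simp
  then have "rv (v i) \<in> gen_cone (rv ` v ` F)" unfolding gc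
    by (intro exI[of _ "\<lambda>l. if l = i then 1 else 0"]) simp
  then have "rv (v i) \<in> ray v j" unfolding F(1) .
  then obtain t where t: "0 \<le> t" "rv (v i) = t *\<^sub>R rv (v j)" unfolding mem_ray by blast
  obtain l where l: "v j $ l \<noteq> 0" using vj0 by (metis vec_eq_iff zero_index)
  have comp: "real_of_int (v i $ m) = t * real_of_int (v j $ m)" for m
    using arg_cong[OF t(2), of "\<lambda>x. x $ m"] by simp
  have "real_of_int (v j $ l * v i $ m) = real_of_int (v i $ l * v j $ m)" for m
    using comp[of m] comp[of l] by (simp add: algebra_simps)
  then have "v j $ l * v i $ m = v i $ l * v j $ m" for m using of_int_eq_iff by blast
  then have "(v j $ l) *s v i = (v i $ l) *s v j" by (simp add: vec_eq_iff)
  then have "v j $ l * h (v i) = v i $ l * h (v j)" using h_smult[OF hadd] by metis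
  moreover have "h (v i) = 1" "h (v j) = 1" using h1 j i FP(1) by auto
  ultimately have eql: "v j $ l = v i $ l" by simp
  then have "t = 1" using comp[of l] l by simp
  then have "rv (v i) = rv (v j)" using t(2) by simp
  then have "v i = v j" by simp
  then have "i = j" using inj i FP(1) j by (meson inj_onD lessThan_iff subsetD)
  then show ?thesis using i F(2,3) by blast
qed

lemma face_supp:
  fixes v :: "nat \<Rightarrow> int^'d" and h :: "int^'d \<Rightarrow> int" and q :: "nat \<Rightarrow> real"
  assumes inj: "inj_on v {..<n}" and hadd: "\<forall>x y. h (x + y) = h x + h y"
    and h1: "\<forall>j<n. h (v j) = 1" and rt: "regular_triangulation v n T"
    and S: "S \<in> T" and q: "\<forall>i\<in>S. 0 \<le> q i" and b: "rv b = (\<Sum>i\<in>S. q i *\<^sub>R rv (v i))"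
    and j: "j < n" and rf: "ray v j \<in> fan v T" and fc: "ray v j face_of sigma v T b"
  shows "j \<in> S \<and> 0 < q j"
proof -
  have SP: "S \<subseteq> {..<n}" "finite S" "independent (rv ` v ` S)"
    using simplices_props[OF rt_simplices[OF rt S]] by auto
  let ?F = "{i\<in>S. 0 < q i}"
  have FP: "?F \<subseteq> {..<n}" "finite ?F" "?F \<subseteq> S" using SP by auto
  have "ray v j \<subseteq> gen_cone (rv ` v ` ?F)"
    using face_of_imp_subset[OF fc] unfolding sigma_eq[OF inj rt S q b] .
  moreover have "rv (v j) \<in> ray v j" unfolding mem_ray by (rule exI[of _ 1]) simp
  ultimately have "rv (v j) \<in> gen_cone (rv ` v ` ?F)" by blast
  then obtain c where c: "\<forall>i\<in>?F. 0 \<le> c i" "rv (v j) = (\<Sum>i\<in>?F. c i *\<^sub>R rv (v i))"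
    unfolding gen_cone_idx[OF inj FP(1,2)] by blast
  obtain S' where S': "S' \<in> T" "j \<in> S'" using ray_fan_vertex[OF inj hadd h1 rt j rf] by blast
  have SP': "S' \<subseteq> {..<n}" "finite S'" using simplices_props[OF rt_simplices[OF rt S'(1)]] by auto
  let ?lam = "\<lambda>i. if i \<in> ?F then c i else 0"
  let ?mu = "\<lambda>i. if i = j then (1::real) else 0"
  have e1: "(\<Sum>i\<in>S. ?lam i *\<^sub>R rv (v i)) = rv (v j)"
    unfolding c(2) by (rule sum_if_restrict[OF SP(2) FP(3)])
  have e2: "(\<Sum>i\<in>S'. ?mu i *\<^sub>R rv (v i)) = rv (v j)"
    unfolding sum_single[OF SP'(2) S'(2)] by simp
  have eq: "(\<Sum>i\<in>S'. ?mu i *\<^sub>R rv (v i)) = (\<Sum>i\<in>S. ?lam i *\<^sub>R rv (v i))"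
    using e1 e2 by simp
  have "?mu j = (if j \<in> S then ?lam j else 0)"
    by (rule coords_eq[OF inj rt S'(1) S _ _ eq S'(2)]) (use c(1) in auto)
  then show ?thesis by (auto split: if_splits)
qed

lemma supp_face:
  fixes v :: "nat \<Rightarrow> int^'d" and q :: "nat \<Rightarrow> real"
  assumes inj: "inj_on v {..<n}" and rt: "regular_triangulation v n T"
    and S: "S \<in> T" and q: "\<forall>i\<in>S. 0 \<le> q i" and b: "rv b = (\<Sum>i\<in>S. q i *\<^sub>R rv (v i))"
    and j: "j \<in> S" "0 < q j"
  shows "ray v j face_of sigma v T b"
  unfolding sigma_eq[OF inj rt S q b]
  by (rule face_ray[OF inj rt_simplices[OF rt S]]) (use j in auto)

lemma sum_if_restrict_int:
  fixes g :: "'i \<Rightarrow> int^'d"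
  assumes "finite G" "F \<subseteq> G"
  shows "(\<Sum>i\<in>G. (if i \<in> F then c i else 0) *s g i) = (\<Sum>i\<in>F. c i *s g i)"
  by (rule sum.mono_neutral_cong_right[OF assms]) (auto simp: vec_eq_iff)

lemma NA_add:
  fixes v :: "nat \<Rightarrow> int^'d"
  assumes inj: "inj_on v {..<n}" and a: "a \<in> nat_span (v ` {..<n})" and b: "b \<in> nat_span (v ` {..<n})"
  shows "a + b \<in> nat_span (v ` {..<n})"
proof -
  note NA = nat_span_idx[OF inj finite_lessThan]
  obtain e1 where e1: "a = (\<Sum>j<n. int (e1 j) *s v j)" using a unfolding NA by blast
  obtain e2 where e2: "b = (\<Sum>j<n. int (e2 j) *s v j)" using b unfolding NA by blast
  have "a + b = (\<Sum>j<n. int (e1 j + e2 j) *s v j)"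
    unfolding e1 e2 by (simp add: vector_sadd_rdistrib sum.distrib)
  then show ?thesis unfolding NA by (rule exI[of _ "\<lambda>j. e1 j + e2 j"])
qed

lemma NA_smult:
  fixes v :: "nat \<Rightarrow> int^'d"
  assumes inj: "inj_on v {..<n}" and a: "a \<in> nat_span (v ` {..<n})"
  shows "int m *s a \<in> nat_span (v ` {..<n})"
proof -
  note NA = nat_span_idx[OF inj finite_lessThan]
  obtain e1 where e1: "a = (\<Sum>j<n. int (e1 j) *s v j)" using a unfolding NA by blast
  have "int m *s a = (\<Sum>j<n. int (m * e1 j) *s v j)"
    unfolding e1 by (simp add: vec_eq_iff sum_distrib_left mult.assoc sum_component)
  then show ?thesis unfolding NA by (rule exI[of _ "\<lambda>j. m * e1 j"])
qed

lemma NA_coef: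
  fixes v :: "nat \<Rightarrow> int^'d"
  assumes inj: "inj_on v {..<n}" and c: "\<forall>j<n. 0 \<le> c j"
  shows "(\<Sum>j<n. c j *s v j) \<in> nat_span (v ` {..<n})"
proof -
  note NA = nat_span_idx[OF inj finite_lessThan]
  have "(\<Sum>j<n. c j *s v j) = (\<Sum>j<n. int (nat (c j)) *s v j)"
    by (rule sum.cong) (use c in auto)
  then show ?thesis unfolding NA by (rule exI[of _ "\<lambda>j. nat (c j)"])
qed

lemma Rsub_supp:
  fixes v :: "nat \<Rightarrow> int^'d"
  assumes inj: "inj_on v {..<n}"
  shows "f \<in> Rsub v n T \<Longrightarrow> f u \<noteq> 0 \<Longrightarrow> u \<in> nat_span (v ` {..<n})"
proof (induction f arbitrary: u rule: Rsub.induct)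
  case one
  then have "u = 0" by (simp add: xmon_neq0)
  have "u = (\<Sum>j<n. int 0 *s v j)" unfolding \<open>u = 0\<close> by (simp add: vec_eq_iff)
  then show ?case unfolding nat_span_idx[OF inj finite_lessThan] by (rule exI[of _ "\<lambda>_. 0"])
next
  case (gen j)
  then have u: "u = v j" by (simp add: xmon_neq0)
  have "v j = (\<Sum>i<n. (if i = j then 1 else 0) *s v i)"
    using sum_if_restrict_int[of "{..<n}" "{j}" "\<lambda>_. 1" v] gen(1) by (simp add: vec_eq_iff)
  also have "\<dots> = (\<Sum>i<n. int (if i = j then 1 else 0) *s v i)" by (rule sum.cong) auto
  finally show ?case unfolding u nat_span_idx[OF inj finite_lessThan] by (rule exI[of _ "\<lambda>i. if i = j then 1 else 0"])
next
  case (add f g)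
  then show ?case by (cases "f u = 0") auto
next
  case (scal f c)
  then show ?case by simp
next
  case (mult f g)
  obtain a b where ab: "f a \<noteq> 0" "g b \<noteq> 0" "u = a + b" using rmult_nz[OF mult(5)] by blast
  show ?case unfolding ab(3) by (rule NA_add[OF inj mult(3)[OF ab(1)] mult(4)[OF ab(2)]])
qed

lemma foldr_supp:
  "foldr (rmult v T) (map (\<lambda>j. xmon (v j)) js) (xmon b) u \<noteq> 0 \<Longrightarrow> u = b + sum_list (map v js)"
proof (induction js arbitrary: u)
  case Nil then show ?case by (simp add: xmon_neq0)
next
  case (Cons j js)
  obtain a c where ac: "xmon (v j) a \<noteq> 0" "foldr (rmult v T) (map (\<lambda>j. xmon (v j)) js) (xmon b) c \<noteq> 0" "u = a + c"
    using rmult_nz[of v T] Cons(2) by fastforce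
  then show ?case using Cons(1)[OF ac(2)] by (simp add: xmon_neq0 algebra_simps)
qed

lemma sum_list_sorted:
  "finite A \<Longrightarrow> sum_list (map f (sorted_list_of_set A)) = sum f A"
  by (simp add: sum_list_distinct_conv_sum_set)

lemma Mgens_good:
  fixes v :: "nat \<Rightarrow> int^'d" and h :: "int^'d \<Rightarrow> int"
  assumes inj: "inj_on v {..<n}" and hadd: "\<forall>x y. h (x + y) = h x + h y"
    and h1: "\<forall>j<n. h (v j) = 1" and rt: "regular_triangulation v n T"
    and g: "g \<in> Mgens v n T \<beta>" and gu: "g u \<noteq> 0"
  shows "\<exists>k>0. \<beta> - u + int (k * P_const v n) *s u \<in> nat_span (v ` {..<n})"
proof -
  define J where "J (r :: nat \<Rightarrow> int) b = {j. j < n \<and> r j < 0 \<and> ray v j \<in> fan v T \<and> \<not> ray v j face_of sigma v T b}" for r b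
  obtain b r where br: "g = foldr (rmult v T) (map (\<lambda>j. xmon (v j)) (sorted_list_of_set (J r b))) (xmon b)"
     "b \<in> Box v T" "b + (\<Sum>j<n. r j *s v j) = \<beta>" "\<forall>j<n. ray v j \<notin> fan v T \<longrightarrow> 0 \<le> r j"
    using g unfolding Mgens_def J_def by blast
  have finJ: "finite (J r b)" "J r b \<subseteq> {..<n}" unfolding J_def by auto
  have u: "u = b + (\<Sum>j\<in>J r b. v j)"
    using foldr_supp[OF gu[unfolded br(1)]] sum_list_sorted[OF finJ(1)] by simp
  obtain S q where Sq: "S \<in> T" "\<forall>j. 0 \<le> q j \<and> q j < 1" "rv b = (\<Sum>j\<in>S. q j *\<^sub>R rv (v j))"
    using br(2) unfolding Box_def by blast
  have Ssimp: "S \<in> simplices v n" using rt_simplices[OF rt Sq(1)] .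
  have SP: "S \<subseteq> {..<n}" "finite S" "independent (rv ` v ` S)" using simplices_props[OF Ssimp] by auto
  have injS: "inj_on v S" using inj SP(1) inj_on_subset by blast
  have q0: "\<forall>i\<in>S. 0 \<le> q i" using Sq(2) by blast
  define P where "P = P_const v n"
  have P1: "1 \<le> P" using P_pos[OF inj] unfolding P_def by simp
  obtain e where e: "int P *s b = (\<Sum>j\<in>S. e j *s v j)"
    using P_mult_span[OF inj Ssimp, of b] unfolding P_def int_span_idx[OF injS SP(2)] by blast
  have "(\<Sum>j\<in>S. (real P * q j) *\<^sub>R rv (v j)) = (\<Sum>j\<in>S. real_of_int (e j) *\<^sub>R rv (v j))"
  proof -
    have "(\<Sum>j\<in>S. (real P * q j) *\<^sub>R rv (v j)) = real P *\<^sub>R rv b"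
      unfolding Sq(3) by (simp add: scaleR_sum_right)
    also have "\<dots> = rv (int P *s b)" by simp
    also have "\<dots> = (\<Sum>j\<in>S. real_of_int (e j) *\<^sub>R rv (v j))" unfolding e by simp
    finally show ?thesis .
  qed
  then have eq_e: "real_of_int (e j) = real P * q j" if "j \<in> S" for j
    using coord_unique[OF inj SP _ that] by metis
  define k where "k = Suc (nat (\<Sum>j<n. \<bar>r j\<bar>))"
  have kr: "- r j < int k" if "j < n" for j
  proof -
    have "\<bar>r j\<bar> \<le> (\<Sum>j<n. \<bar>r j\<bar>)" by (rule member_le_sum) (use that in auto)
    then show ?thesis unfolding k_def by linarith
  qed
  have k1: "1 \<le> k" unfolding k_def by simp
  have kP0: "k * 1 \<le> k * P" using P1 by (rule mult_le_mono2)
  have kP: "int k \<le> int (k * P)" using kP0 by (simp only: of_nat_le_iff mult_1_right)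
  define coef where "coef j = r j + (if j \<in> J r b then int (k * P) - 1 else 0) + (if j \<in> S then int k * e j else 0)" for j
  have e0: "0 \<le> e j" if "j \<in> S" for j
  proof -
    have "0 \<le> real_of_int (e j)" unfolding eq_e[OF that] using q0 that by simp
    then show ?thesis by simp
  qed
  have coef_nn: "0 \<le> coef j" if j: "j < n" for j
  proof -
    have t2: "0 \<le> (if j \<in> J r b then int (k * P) - 1 else 0)" using k1 kP by simp
    have t3: "0 \<le> (if j \<in> S then int k * e j else 0)" using e0 by simp
    show ?thesis
    proof (cases "0 \<le> r j")
      case True then show ?thesis unfolding coef_def using t2 t3 by simp
    next
      case False
      then have rf: "ray v j \<in> fan v T" using br(4) j by force
      show ?thesis
      proof (cases "j \<in> J r b")
        case True
        then show ?thesis unfolding coef_def using t3 kr[OF j] kP by simp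
      next
        case nJ: False
        then have fc: "ray v j face_of sigma v T b" unfolding J_def using j False rf by auto
        have jS: "j \<in> S \<and> 0 < q j" by (rule face_supp[OF inj hadd h1 rt Sq(1) q0 Sq(3) j rf fc])
        then have "0 < real_of_int (e j)" unfolding eq_e[OF conjunct1[OF jS]] using P1 by simp
        then have "1 \<le> e j" by simp
        then have "int k * 1 \<le> int k * e j" by (intro mult_left_mono) simp_all
        then have "int k \<le> int k * e j" by simp
        then show ?thesis unfolding coef_def using nJ jS kr[OF j] by simp
      qed
    qed
  qed
  have R1: "(\<Sum>j<n. coef j *s v j) = (\<Sum>j<n. r j *s v j) + (\<Sum>j<n. (if j \<in> J r b then int (k*P) - 1 else 0) *s v j) + (\<Sum>j<n. (if j \<in> S then int k * e j else 0) *s v j)"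
    unfolding coef_def by (simp only: vector_sadd_rdistrib sum.distrib)
  have R2: "(\<Sum>j<n. (if j \<in> J r b then int (k*P) - 1 else 0) *s v j) = (int (k*P) - 1) *s (\<Sum>j\<in>J r b. v j)"
    unfolding sum_if_restrict_int[OF finite_lessThan finJ(2)] by (rule sum_cmul)
  have R3: "(\<Sum>j<n. (if j \<in> S then int k * e j else 0) *s v j) = int k *s (int P *s b)"
    unfolding sum_if_restrict_int[OF finite_lessThan SP(1)] e by (simp only: sum_cmul[symmetric] vector_smult_assoc)
  have "\<beta> - u + int (k * P) *s u = (\<Sum>j<n. r j *s v j) + (int (k * P) - 1) *s (\<Sum>j\<in>J r b. v j) + int k *s (int P *s b)"
    unfolding u br(3)[symmetric] by (simp add: vec_eq_iff algebra_simps)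
  also have "\<dots> = (\<Sum>j<n. coef j *s v j)"
    unfolding R1 R2 R3 ..
  finally have "\<beta> - u + int (k * P) *s u \<in> nat_span (v ` {..<n})"
    using NA_coef[OF inj, of coef] coef_nn by simp
  then show ?thesis using k1 unfolding P_def by (intro exI[of _ k]) simp
qed

lemma rmult_xmon:
  "same_cone v T a b \<Longrightarrow> rmult v T (xmon a) (xmon b) = xmon (a + b)"
  by (rule ext) (simp add: rmult_xmon_app)

lemma Good_add:
  fixes v :: "nat \<Rightarrow> int^'d"
  assumes inj: "inj_on v {..<n}" and k: "0 < k" and P: "0 < P"
    and g: "\<beta> - u + int (k * P) *s u \<in> nat_span (v ` {..<n})"
    and a: "a \<in> nat_span (v ` {..<n})"
  shows "\<beta> - (a + u) + int (k * P) *s (a + u) \<in> nat_span (v ` {..<n})"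
proof -
  have kP: "1 \<le> k * P" using k P by simp
  have eqn: "\<beta> - (a + u) + int (k * P) *s (a + u) = (\<beta> - u + int (k * P) *s u) + int (k * P - 1) *s a"
    using kP by (simp add: vec_eq_iff of_nat_diff algebra_simps)
  show ?thesis unfolding eqn by (rule NA_add[OF inj g NA_smult[OF inj a]])
qed

lemma Mmod_good:
  fixes v :: "nat \<Rightarrow> int^'d" and h :: "int^'d \<Rightarrow> int"
  assumes inj: "inj_on v {..<n}" and hadd: "\<forall>x y. h (x + y) = h x + h y"
    and h1: "\<forall>j<n. h (v j) = 1" and rt: "regular_triangulation v n T"
  shows "f \<in> Mmod v n T \<beta> \<Longrightarrow> f u \<noteq> 0 \<Longrightarrow> \<exists>k>0. \<beta> - u + int (k * P_const v n) *s u \<in> nat_span (v ` {..<n})"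
proof (induction f arbitrary: u rule: Mmod.induct)
  case zero then show ?case by simp
next
  case (gen g) then show ?case using Mgens_good[OF inj hadd h1 rt] by blast
next
  case (add f g)
  then show ?case by (cases "f u = 0") auto
next
  case (smult f m)
  obtain a b where ab: "f a \<noteq> 0" "m b \<noteq> 0" "u = a + b" using rmult_nz[OF smult(4)] by blast
  obtain k where k: "0 < k" "\<beta> - b + int (k * P_const v n) *s b \<in> nat_span (v ` {..<n})"
    using smult(3)[OF ab(2)] by blast
  have "\<beta> - u + int (k * P_const v n) *s u \<in> nat_span (v ` {..<n})"
    unfolding ab(3) by (rule Good_add[OF inj k(1) P_pos[OF inj] k(2) Rsub_supp[OF inj smult(1) ab(1)]])
  then show ?case using k(1) by blast
qed

lemma cone_add:
  fixes v :: "nat \<Rightarrow> int^'d"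
  assumes inj: "inj_on v {..<n}" and S: "S \<subseteq> {..<n}" "finite S"
    and x: "x \<in> gen_cone (rv ` v ` S)" and y: "y \<in> gen_cone (rv ` v ` S)"
  shows "x + y \<in> gen_cone (rv ` v ` S)"
proof -
  note gc = gen_cone_idx[OF inj S]
  obtain c where c: "\<forall>i\<in>S. 0 \<le> c i" "x = (\<Sum>i\<in>S. c i *\<^sub>R rv (v i))" using x unfolding gc by blast
  obtain d where d: "\<forall>i\<in>S. 0 \<le> d i" "y = (\<Sum>i\<in>S. d i *\<^sub>R rv (v i))" using y unfolding gc by blast
  have "x + y = (\<Sum>i\<in>S. (c i + d i) *\<^sub>R rv (v i))" unfolding c(2) d(2) by (simp add: scaleR_add_left sum.distrib)
  moreover have "\<forall>i\<in>S. 0 \<le> c i + d i" using c(1) d(1) by simp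
  ultimately show ?thesis unfolding gc by (intro exI[of _ "\<lambda>i. c i + d i"]) (intro conjI)
qed

lemma cone_vert:
  fixes v :: "nat \<Rightarrow> int^'d"
  assumes inj: "inj_on v {..<n}" and S: "S \<subseteq> {..<n}" "finite S" and j: "j \<in> S"
  shows "rv (v j) \<in> gen_cone (rv ` v ` S)"
proof -
  have "rv (v j) = (\<Sum>l\<in>S. (if l = j then 1 else 0) *\<^sub>R rv (v l))"
    unfolding sum_single[OF S(2) j] by simp
  then show ?thesis unfolding gen_cone_idx[OF inj S]
    by (intro exI[of _ "\<lambda>l. if l = j then 1 else 0"]) simp
qed

lemma cone_natsum:
  fixes v :: "nat \<Rightarrow> int^'d"
  assumes inj: "inj_on v {..<n}" and S: "S \<subseteq> {..<n}" "finite S" and S': "S' \<subseteq> S"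
  shows "rv (\<Sum>j\<in>S'. int (mm j) *s v j) \<in> gen_cone (rv ` v ` S)"
proof -
  have "rv (\<Sum>j\<in>S'. int (mm j) *s v j) = (\<Sum>j\<in>S'. real (mm j) *\<^sub>R rv (v j))" by simp
  also have "\<dots> = (\<Sum>j\<in>S. (if j \<in> S' then real (mm j) else 0) *\<^sub>R rv (v j))"
    by (rule sum_if_restrict[OF S(2) S', symmetric])
  finally show ?thesis unfolding gen_cone_idx[OF inj S]
    by (intro exI[of _ "\<lambda>j. if j \<in> S' then real (mm j) else 0"]) simp
qed

lemma fan_cell: "S \<in> T \<Longrightarrow> gen_cone (rv ` v ` S) \<in> fan v T"
  unfolding fan_def by blast

lemma ray_cell:
  assumes "S \<in> T" "j \<in> S"
  shows "ray v j \<in> fan v T"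
proof -
  have "ray v j = gen_cone (rv ` v ` {j})"
    unfolding ray_def gen_cone_def by auto
  then show ?thesis unfolding fan_def using assms by blast
qed

lemma foldr_val:
  fixes v :: "nat \<Rightarrow> int^'d"
  assumes inj: "inj_on v {..<n}" and rt: "regular_triangulation v n T" and S: "S \<in> T"
    and b: "rv b \<in> gen_cone (rv ` v ` S)"
  shows "set js \<subseteq> S \<Longrightarrow> foldr (rmult v T) (map (\<lambda>j. xmon (v j)) js) (xmon b) = xmon (b + sum_list (map v js))
     \<and> rv (b + sum_list (map v js)) \<in> gen_cone (rv ` v ` S)"
proof (induction js)
  case Nil then show ?case using b by simp
next
  case (Cons j js)
  have SP: "S \<subseteq> {..<n}" "finite S" using simplices_props[OF rt_simplices[OF rt S]] by auto
  have j: "j \<in> S" using Cons(2) by simp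
  have IH: "foldr (rmult v T) (map (\<lambda>j. xmon (v j)) js) (xmon b) = xmon (b + sum_list (map v js))"
    "rv (b + sum_list (map v js)) \<in> gen_cone (rv ` v ` S)" using Cons by auto
  have vj: "rv (v j) \<in> gen_cone (rv ` v ` S)" by (rule cone_vert[OF inj SP j])
  have sc: "same_cone v T (v j) (b + sum_list (map v js))"
    unfolding same_cone_def using fan_cell[OF S] vj IH(2) by blast
  have eq: "v j + (b + sum_list (map v js)) = b + sum_list (map v (j # js))" by (simp add: algebra_simps)
  have "foldr (rmult v T) (map (\<lambda>j. xmon (v j)) (j # js)) (xmon b) = xmon (b + sum_list (map v (j # js)))"
    using IH(1) sc by (simp add: rmult_xmon add.left_commute)
  moreover have "rv (b + sum_list (map v (j # js))) \<in> gen_cone (rv ` v ` S)"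
    using cone_add[OF inj SP vj IH(2)] by (simp add: add.left_commute)
  ultimately show ?case by blast
qed

lemma Mmod_step:
  fixes v :: "nat \<Rightarrow> int^'d"
  assumes inj: "inj_on v {..<n}" and rt: "regular_triangulation v n T" and S: "S \<in> T" and j: "j \<in> S"
    and u: "xmon u \<in> Mmod v n T \<beta>" "rv u \<in> gen_cone (rv ` v ` S)"
  shows "xmon (v j + u) \<in> Mmod v n T \<beta>"
proof -
  have SP: "S \<subseteq> {..<n}" "finite S" using simplices_props[OF rt_simplices[OF rt S]] by auto
  have vj: "rv (v j) \<in> gen_cone (rv ` v ` S)" by (rule cone_vert[OF inj SP j])
  have sc: "same_cone v T (v j) u" unfolding same_cone_def using fan_cell[OF S] vj u(2) by blast
  have R: "xmon (v j) \<in> Rsub v n T" using Rsub.gen[of j n v T] j SP(1) ray_cell[OF S j] by blast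
  have "rmult v T (xmon (v j)) (xmon u) \<in> Mmod v n T \<beta>" by (rule Mmod.smult[OF R u(1)])
  then show ?thesis using sc by (simp add: rmult_xmon)
qed

lemma Mmod_multi:
  fixes v :: "nat \<Rightarrow> int^'d"
  assumes inj: "inj_on v {..<n}" and rt: "regular_triangulation v n T" and S: "S \<in> T"
    and u: "xmon u \<in> Mmod v n T \<beta>" "rv u \<in> gen_cone (rv ` v ` S)"
  shows "finite S' \<Longrightarrow> S' \<subseteq> S \<Longrightarrow> xmon ((\<Sum>j\<in>S'. int (mm j) *s v j) + u) \<in> Mmod v n T \<beta>"
proof (induction S' rule: finite_induct)
  case empty then show ?case using u(1) by simp
next
  case (insert j S'')
  have SP: "S \<subseteq> {..<n}" "finite S" using simplices_props[OF rt_simplices[OF rt S]] by auto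
  have j: "j \<in> S" using insert(4) by simp
  let ?Y = "(\<Sum>j\<in>S''. int (mm j) *s v j) + u"
  have Y: "xmon ?Y \<in> Mmod v n T \<beta>" using insert by simp
  have rY: "rv ?Y \<in> gen_cone (rv ` v ` S)"
    using cone_add[OF inj SP cone_natsum[OF inj SP, of S'' mm] u(2)] insert(4) by simp
  have step: "xmon (int m *s v j + ?Y) \<in> Mmod v n T \<beta> \<and> rv (int m *s v j + ?Y) \<in> gen_cone (rv ` v ` S)" for m
  proof (induction m)
    case 0 then show ?case using Y rY by (simp add: vec_eq_iff)
  next
    case (Suc m)
    have eq: "int (Suc m) *s v j + ?Y = v j + (int m *s v j + ?Y)" by (simp add: vec_eq_iff algebra_simps)
    show ?case unfolding eq
      using Mmod_step[OF inj rt S j conjunct1[OF Suc] conjunct2[OF Suc]]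
        cone_add[OF inj SP cone_vert[OF inj SP j] conjunct2[OF Suc]] by simp
  qed
  have "(\<Sum>j\<in>insert j S''. int (mm j) *s v j) + u = int (mm j) *s v j + ?Y"
    using insert(1,2) by (simp add: algebra_simps)
  then show ?case using conjunct1[OF step[of "mm j"]] by (simp add: add.assoc)
qed

lemma rhs_imp_lhs:
  fixes v :: "nat \<Rightarrow> int^'d"
  assumes inj: "inj_on v {..<n}" and rt: "regular_triangulation v n T"
    and Kw: "rv w \<in> Kcone v n" and k: "0 < k"
    and y: "(\<beta> - w) + int (k * P_const v n) *s w \<in> nat_span (v ` {..<n})"
  shows "xmon w \<in> Mmod v n T \<beta>"
proof -
  define P where "P = P_const v n"
  obtain a where a: "(\<beta> - w) + int (k * P) *s w = (\<Sum>j<n. int (a j) *s v j)"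
    using y unfolding P_def nat_span_idx[OF inj finite_lessThan] by blast
  obtain t x where tx: "rv w = t *\<^sub>R x" "0 \<le> t" "x \<in> convex hull (rv ` v ` {..<n})"
    using Kw unfolding Kcone_def by blast
  have cov: "(\<Union>S\<in>T. convex hull (rv ` v ` S)) = convex hull (rv ` v ` {..<n})"
    using conjunct1[OF conjunct2[OF rt[unfolded regular_triangulation_def]]] .
  obtain S where S: "S \<in> T" "x \<in> convex hull (rv ` v ` S)"
    using tx(3) unfolding cov[symmetric] by blast
  have Ssimp: "S \<in> simplices v n" using rt_simplices[OF rt S(1)] .
  have SP: "S \<subseteq> {..<n}" "finite S" "independent (rv ` v ` S)" using simplices_props[OF Ssimp] by auto
  have injS: "inj_on v S" using inj SP(1) inj_on_subset by blast
  note gc = gen_cone_idx[OF inj SP(1,2)]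
  have "x \<in> gen_cone (rv ` v ` S)"
  proof -
    obtain u where u: "\<forall>y\<in>rv ` v ` S. 0 \<le> u y" "(\<Sum>y\<in>rv ` v ` S. u y *\<^sub>R y) = x"
      using S(2) unfolding convex_hull_finite[OF finite_imageI[OF finite_imageI[OF SP(2)]]] by blast
    then show ?thesis unfolding gen_cone_def by blast
  qed
  then obtain c where c: "\<forall>i\<in>S. 0 \<le> c i" "x = (\<Sum>i\<in>S. c i *\<^sub>R rv (v i))" unfolding gc by blast
  define cw where "cw i = t * c i" for i
  have cw0: "0 \<le> cw i" if "i \<in> S" for i unfolding cw_def using c(1) tx(2) that by simp
  have rvw: "rv w = (\<Sum>i\<in>S. cw i *\<^sub>R rv (v i))"
    unfolding tx(1) c(2) cw_def by (simp add: scaleR_sum_right)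
  obtain e where e: "int P *s w = (\<Sum>j\<in>S. e j *s v j)"
    using P_mult_span[OF inj Ssimp, of w] unfolding P_def int_span_idx[OF injS SP(2)] by blast
  have "(\<Sum>j\<in>S. (real P * cw j) *\<^sub>R rv (v j)) = (\<Sum>j\<in>S. real_of_int (e j) *\<^sub>R rv (v j))"
  proof -
    have "(\<Sum>j\<in>S. (real P * cw j) *\<^sub>R rv (v j)) = real P *\<^sub>R rv w"
      unfolding rvw by (simp add: scaleR_sum_right)
    also have "\<dots> = rv (int P *s w)" by simp
    also have "\<dots> = (\<Sum>j\<in>S. real_of_int (e j) *\<^sub>R rv (v j))" unfolding e by simp
    finally show ?thesis .
  qed
  then have eq_e: "real_of_int (e j) = real P * cw j" if "j \<in> S" for j
    using coord_unique[OF inj SP _ that] by metis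
  define fl where "fl j = \<lfloor>cw j\<rfloor>" for j
  define fr where "fr j = cw j - of_int (fl j)" for j
  define b where "b = w - (\<Sum>j\<in>S. fl j *s v j)"
  have rvb: "rv b = (\<Sum>j\<in>S. fr j *\<^sub>R rv (v j))"
    unfolding b_def rv_diff rvw rv_sum rv_smult fr_def by (simp add: scaleR_diff_left sum_subtractf)
  define q where "q j = (if j \<in> S then fr j else 0)" for j
  have q01: "0 \<le> q j \<and> q j < 1" for j unfolding q_def fr_def fl_def by simp linarith
  have q0: "\<forall>i\<in>S. 0 \<le> q i" using q01 by blast
  have rvbq: "rv b = (\<Sum>j\<in>S. q j *\<^sub>R rv (v j))" unfolding rvb q_def by (rule sum.cong) auto
  have Box: "b \<in> Box v T" unfolding Box_def using S(1) q01 rvbq by blast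
  have bcone: "rv b \<in> gen_cone (rv ` v ` S)" unfolding gc using q0 rvbq by blast
  define r where "r j = int (a j) + (if j \<in> S then fl j - int k * e j else 0)" for j
  have beq: "b + (\<Sum>j<n. r j *s v j) = \<beta>"
  proof -
    have s1: "(\<Sum>j<n. r j *s v j) = (\<Sum>j<n. int (a j) *s v j) + (\<Sum>j<n. (if j \<in> S then fl j - int k * e j else 0) *s v j)"
      unfolding r_def by (simp only: vector_sadd_rdistrib sum.distrib)
    have s2: "(\<Sum>j<n. (if j \<in> S then fl j - int k * e j else 0) *s v j) = (\<Sum>j\<in>S. (fl j - int k * e j) *s v j)"
      by (rule sum_if_restrict_int[OF finite_lessThan SP(1)])
    have s3: "(\<Sum>j\<in>S. (fl j - int k * e j) *s v j) = (\<Sum>j\<in>S. fl j *s v j) - int k *s (int P *s w)"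
      unfolding e by (simp add: vec_eq_iff sum_component left_diff_distrib sum_subtractf sum_distrib_left mult.assoc)
    show ?thesis unfolding s1 s2 s3 a[symmetric] b_def by (simp add: vec_eq_iff algebra_simps)
  qed
  have rcond: "\<forall>j<n. ray v j \<notin> fan v T \<longrightarrow> 0 \<le> r j"
  proof (intro allI impI)
    fix j assume j: "j < n" "ray v j \<notin> fan v T"
    then have "j \<notin> S" using ray_cell[OF S(1)] by blast
    then show "0 \<le> r j" unfolding r_def by simp
  qed
  define J where "J = {j. j < n \<and> r j < 0 \<and> ray v j \<in> fan v T \<and> \<not> ray v j face_of sigma v T b}"
  have JS: "J \<subseteq> S"
  proof
    fix j assume "j \<in> J"
    then have "r j < 0" unfolding J_def by blast
    then show "j \<in> S" unfolding r_def by (cases "j \<in> S") auto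
  qed
  have Jfl: "1 \<le> fl j" if j: "j \<in> J" for j
  proof (rule ccontr)
    assume nf: "\<not> 1 \<le> fl j"
    have jS: "j \<in> S" using JS j by blast
    have "0 \<le> fl j" unfolding fl_def using cw0[OF jS] by simp
    then have fl0: "fl j = 0" using nf by simp
    have "r j < 0" using j unfolding J_def by blast
    then have "int (a j) < int k * e j" unfolding r_def using jS fl0 by simp
    then have "0 < int k * e j" by linarith
    then have "0 < e j" using k by (simp add: zero_less_mult_iff)
    then have "0 < real P * cw j" unfolding eq_e[OF jS, symmetric] by simp
    then have "0 < cw j" using cw0[OF jS] by (simp add: zero_less_mult_iff)
    then have "0 < q j" unfolding q_def fr_def using jS fl0 by simp
    then have "ray v j face_of sigma v T b" by (rule supp_face[OF inj rt S(1) q0 rvbq jS])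
    then show False using j unfolding J_def by blast
  qed
  have finJ: "finite J" using JS SP(2) finite_subset by blast
  let ?js = "sorted_list_of_set J"
  have setjs: "set ?js \<subseteq> S" using JS finJ by simp
  have fv: "foldr (rmult v T) (map (\<lambda>j. xmon (v j)) ?js) (xmon b) = xmon (b + sum_list (map v ?js))
     \<and> rv (b + sum_list (map v ?js)) \<in> gen_cone (rv ` v ` S)"
    by (rule foldr_val[OF inj rt S(1) bcone setjs])
  have "foldr (rmult v T) (map (\<lambda>j. xmon (v j)) ?js) (xmon b) \<in> Mgens v n T \<beta>"
    unfolding Mgens_def J_def using Box beq rcond by blast
  then have g: "xmon (b + (\<Sum>j\<in>J. v j)) \<in> Mmod v n T \<beta>"
    using conjunct1[OF fv] sum_list_sorted[OF finJ] Mmod.gen by metis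
  have gcone: "rv (b + (\<Sum>j\<in>J. v j)) \<in> gen_cone (rv ` v ` S)"
    using conjunct2[OF fv] sum_list_sorted[OF finJ] by metis
  define mm where "mm j = nat (fl j - (if j \<in> J then 1 else 0))" for j
  have mmj: "int (mm j) = fl j - (if j \<in> J then 1 else 0)" if "j \<in> S" for j
  proof -
    have "0 \<le> fl j" unfolding fl_def using cw0[OF that] by simp
    then show ?thesis unfolding mm_def using Jfl by auto
  qed
  have M: "xmon ((\<Sum>j\<in>S. int (mm j) *s v j) + (b + (\<Sum>j\<in>J. v j))) \<in> Mmod v n T \<beta>"
    by (rule Mmod_multi[OF inj rt S(1) g gcone SP(2) order_refl])
  have "(\<Sum>j\<in>S. int (mm j) *s v j) = (\<Sum>j\<in>S. fl j *s v j - (if j \<in> J then 1 else 0) *s v j)"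
    by (rule sum.cong) (simp_all add: mmj vec_eq_iff algebra_simps)
  also have "\<dots> = (\<Sum>j\<in>S. fl j *s v j) - (\<Sum>j\<in>J. v j)"
    using sum_if_restrict_int[OF SP(2) JS, of "\<lambda>_. 1" v] by (simp add: sum_subtractf vec_eq_iff)
  finally have "(\<Sum>j\<in>S. int (mm j) *s v j) + (b + (\<Sum>j\<in>J. v j)) = w"
    unfolding b_def by (simp add: algebra_simps)
  then show ?thesis using M by simp
qed

theorem proposition2p14:
  fixes v :: "nat \<Rightarrow> int^'d" and n :: nat and T :: "nat set set"
    and h :: "int^'d \<Rightarrow> int" and \<beta> w :: "int^'d"
  assumes "inj_on v {..<n}"
    and "int_span (v ` {..<n}) = UNIV"
    and "\<forall>x y. h (x + y) = h x + h y"
    and "\<forall>j<n. h (v j) = 1"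
    and "regular_triangulation v n T"
    and "rv w \<in> Kcone v n"
  shows "xmon w \<in> Mmod v n T \<beta> \<longleftrightarrow>
    (\<exists>k::nat. 0 < k \<and> (\<beta> - w) + int (k * P_const v n) *s w \<in> nat_span (v ` {..<n}))"
proof
  assume "xmon w \<in> Mmod v n T \<beta>"
  moreover have "xmon w w \<noteq> 0" by (simp add: xmon_def)
  ultimately show "\<exists>k::nat. 0 < k \<and> (\<beta> - w) + int (k * P_const v n) *s w \<in> nat_span (v ` {..<n})"
    using Mmod_good[OF assms(1,3,4,5)] by blast
next
  assume "\<exists>k::nat. 0 < k \<and> (\<beta> - w) + int (k * P_const v n) *s w \<in> nat_span (v ` {..<n})"
  then obtain k where "0 < k" "(\<beta> - w) + int (k * P_const v n) *s w \<in> nat_span (v ` {..<n})" by blast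
  then show "xmon w \<in> Mmod v n T \<beta>" by (rule rhs_imp_lhs[OF assms(1,5,6)])
qed

end
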